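(* Let $\tau_3$ be the Hopf algebra automorphism of $H_8$ with $\tau_3(x)=y$, $\tau_3(y)=x$, $\tau_3(z)=\frac12(z+xz+yz-xyz)$. Then: (1) $(M\langle b\mathrm{i},x\rangle)^{\tau_3}\cong M\langle-b\mathrm{i},y\rangle$ for $b=\pm1$; (2) $(M\langle(xy,x)\rangle)^{\tau_3}\cong M\langle(y,xy)\rangle$ and $(W^{b_1,-1})^{\tau_3}\cong W^{-b_1,-1}$ for $b_1=\pm1$; (3) there are Hopf algebra isomorphisms $\mathfrak{B}(\Omega_2(n_1,n_2))\#H_8\cong\mathfrak{B}(\Omega_3(n_2,n_1))\#H_8$ and $\mathfrak{B}(\Omega_4(n_1,n_2))\#H_8\cong\mathfrak{B}(\Omega_5(n_2,n_1))\#H_8$ for all $n_1,n_2\ge0$.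
   Context: $\mathbb{K}$ is an algebraically closed field of characteristic $0$, $\mathrm{i}\in\mathbb{K}$ a fixed square root of $-1$. $H_8$ is the Hopf algebra generated by $x,y,z$ with $x^2=y^2=1$, $z^2=\frac12(1+x+y-xy)$, $xy=yx$, $zx=yz$, $zy=xz$, $\Delta(x)=x\otimes x$, $\Delta(y)=y\otimes y$, $\Delta(z)=\frac12(1\otimes1+1\otimes x+y\otimes1-y\otimes x)(z\otimes z)$, $\varepsilon=1$ on generators, $S(x)=x,S(y)=y,S(z)=z$. Put $f_{jk}=\frac14(1+(-1)^jx)(1+(-1)^ky)$. ${}^{H_8}_{H_8}\mathcal{YD}$ is the category of left Yetter–Drinfeld modules over $H_8$. For a Hopf automorphism $\psi$ of $H_8$ and $V\in{}^{H_8}_{H_8}\mathcal{YD}$, $V^\psi$ is the same vector space with action $h\cdot_\psi v=\psi(h)\cdot v$ and coaction $\rho^\psi=(\psi^{-1}\otimes\mathrm{id})\rho$; it is again a Yetter–Drinfeld module. $\mathfrak{B}(V)$ is the Nichols algebra of $V$; for a braided Hopf algebra $A$ in ${}^{H_8}_{H_8}\mathcal{YD}$, $A\#H_8$ is the Radford biproduct (bosonization): $A\otimes H_8$ with $(a\#h)(a'\#h')=a(h_{(1)}\cdot a')\#h_{(2)}h'$ and $\Delta(a\#h)=a^{(1)}\#(a^{(2)})_{(-1)}h_{(1)}\otimes(a^{(2)})_{(0)}\#h_{(2)}$. Modules (action and coaction on a basis): $M\langle b,g\rangle=\mathbb{K}p$ ($b\in\{\pm\mathrm{i}\}$, $g\in\{x,y\}$)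 with $x\cdot p=y\cdot p=b^2p$, $z\cdot p=bp$, $\rho(p)=g\otimes p$. For $(g_1,g_2)\in\{(xy,x),(y,xy)\}$, $M\langle(g_1,g_2)\rangle$ has basis $p_1,p_2$, $x\cdot p_1=p_1$, $x\cdot p_2=-p_2$, $y\cdot p_1=-p_1$, $y\cdot p_2=p_2$, $z\cdot p_1=p_2$, $z\cdot p_2=p_1$, $\rho(p_k)=g_k\otimes p_k$. For $b_1\in\{\pm1\}$, $W^{b_1,-1}$ has basis $p_1,p_2$, $x\cdot p_1=y\cdot p_1=p_1$, $x\cdot p_2=y\cdot p_2=-p_2$, $z\cdot p_1=-p_1$, $z\cdot p_2=\mathrm{i}b_1p_2$, $\rho(p_1)=(f_{00}-\mathrm{i}b_1f_{11})z\otimes p_1+(f_{10}+\mathrm{i}b_1f_{01})z\otimes p_2$, $\rho(p_2)=(f_{00}+\mathrm{i}b_1f_{11})z\otimes p_2+(f_{10}-\mathrm{i}b_1f_{01})z\otimes p_1$. $\Omega_2(n_1,n_2)=M\langle\mathrm{i},x\rangle^{n_1}\oplus M\langle-\mathrm{i},x\rangle^{n_2}\oplus M\langle(xy,x)\rangle$; $\Omega_3(n_1,n_2)=M\langle\mathrm{i},y\rangle^{n_1}\oplus M\langle-\mathrm{i},y\rangle^{n_2}\oplus M\langle(y,xy)\rangle$; $\Omega_4(n_1,n_2)=M\langle\mathrm{i},x\rangle^{n_1}\oplus M\langle\mathrm{i},y\rangle^{n_2}\oplus W^{1,-1}$; $\Omega_5(n_1,n_2)=M\langle-\mathrm{i},x\rangle^{n_1}\oplus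 M\langle-\mathrm{i},y\rangle^{n_2}\oplus W^{-1,-1}$. *)

theory Defs
  imports Main "HOL-Computational_Algebra.Polynomial"
begin

text \<open>A vector with basis indexed by type 'p is a function 'p => 'k (always used with
finite support).  Linear maps out of such a free space are determined by the images
of basis vectors; lin f is the linear extension of f.\<close>

definition e :: "'p \<Rightarrow> 'p \<Rightarrow> 'k::field" where
  "e p = (\<lambda>q. if q = p then 1 else 0)"

definition vadd :: "('p \<Rightarrow> 'k::field) \<Rightarrow> ('p \<Rightarrow> 'k) \<Rightarrow> 'p \<Rightarrow> 'k" where
  "vadd u v = (\<lambda>p. u p + v p)"

definition vsub :: "('p \<Rightarrow> 'k::field) \<Rightarrow> ('p \<Rightarrow> 'k) \<Rightarrow> 'p \<Rightarrow> 'k" where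
  "vsub u v = (\<lambda>p. u p - v p)"

definition vsc :: "'k::field \<Rightarrow> ('p \<Rightarrow> 'k) \<Rightarrow> 'p \<Rightarrow> 'k" where
  "vsc c u = (\<lambda>p. c * u p)"

definition vzero :: "'p \<Rightarrow> 'k::field" where
  "vzero = (\<lambda>p. 0)"

definition lin :: "('p \<Rightarrow> 'q \<Rightarrow> 'k::field) \<Rightarrow> ('p \<Rightarrow> 'k) \<Rightarrow> 'q \<Rightarrow> 'k" where
  "lin f u = (\<lambda>q. \<Sum>p\<in>{p. u p \<noteq> 0}. u p * f p q)"

definition bil :: "('p \<Rightarrow> 'q \<Rightarrow> 'r \<Rightarrow> 'k::field) \<Rightarrow> ('p \<Rightarrow> 'k) \<Rightarrow> ('q \<Rightarrow> 'k) \<Rightarrow> 'r \<Rightarrow> 'k" where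
  "bil f u v = lin (\<lambda>p. lin (f p) v) u"

definition vmap :: "('p \<Rightarrow> 'q) \<Rightarrow> ('p \<Rightarrow> 'k::field) \<Rightarrow> 'q \<Rightarrow> 'k" where
  "vmap f u = lin (\<lambda>p. e (f p)) u"

definition tens :: "('p \<Rightarrow> 'k::field) \<Rightarrow> ('q \<Rightarrow> 'k) \<Rightarrow> 'p \<times> 'q \<Rightarrow> 'k" where
  "tens u v = (\<lambda>(p, q). u p * v q)"

definition fsupp :: "('p \<Rightarrow> 'k::zero) \<Rightarrow> bool" where
  "fsupp u \<longleftrightarrow> finite {p. u p \<noteq> 0}"

definition lspan :: "('p \<Rightarrow> 'k::field) set \<Rightarrow> ('p \<Rightarrow> 'k) set" where
  "lspan S = {v. \<exists>F c. finite F \<and> F \<subseteq> S \<and> v = (\<lambda>p. \<Sum>s\<in>F. c s * s p)}"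

text \<open>Basis of H8: (a,b,c) stands for x^a y^b z^c.\<close>
type_synonym hb = "bool \<times> bool \<times> bool"

definition h1 :: hb where "h1 = (False, False, False)"
definition hx :: hb where "hx = (True, False, False)"
definition hy :: hb where "hy = (False, True, False)"
definition hxy :: hb where "hxy = (True, True, False)"
definition hz :: hb where "hz = (False, False, True)"

text \<open>Product of basis elements, using zx = yz, zy = xz, z^2 = (1+x+y-xy)/2.\<close>
definition h8m :: "hb \<Rightarrow> hb \<Rightarrow> hb \<Rightarrow> 'k::field" where
  "h8m p q = (case p of (a, b, c) \<Rightarrow> case q of (a', b', c') \<Rightarrow>
     if \<not> c then e (a \<noteq> a', b \<noteq> b', c')
     else (let g1 = (a \<noteq> b'); g2 = (b \<noteq> a') in
       if \<not> c' then e (g1, g2, True)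
       else vsc (1/2) (\<lambda>r. e (g1, g2, False) r + e (\<not> g1, g2, False) r
                          + e (g1, \<not> g2, False) r - e (\<not> g1, \<not> g2, False) r)))"

definition h8mult :: "(hb \<Rightarrow> 'k::field) \<Rightarrow> (hb \<Rightarrow> 'k) \<Rightarrow> hb \<Rightarrow> 'k" where
  "h8mult u v = bil h8m u v"

definition h8tmult :: "(hb \<times> hb \<Rightarrow> 'k::field) \<Rightarrow> (hb \<times> hb \<Rightarrow> 'k) \<Rightarrow> hb \<times> hb \<Rightarrow> 'k" where
  "h8tmult u v = bil (\<lambda>(p, q) (p', q'). tens (h8m p p') (h8m q q')) u v"

definition dz :: "hb \<times> hb \<Rightarrow> 'k::field" where
  "dz = h8tmult (vsc (1/2) (\<lambda>r. e (h1, h1) r + e (h1, hx) r + e (hy, h1) r - e (hy, hx) r))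
               (e (hz, hz))"

text \<open>Comultiplication, as the algebra map with the given values on x, y, z.\<close>
definition h8comult :: "hb \<Rightarrow> hb \<times> hb \<Rightarrow> 'k::field" where
  "h8comult p = (case p of (a, b, c) \<Rightarrow>
     h8tmult (h8tmult (if a then e (hx, hx) else e (h1, h1))
                      (if b then e (hy, hy) else e (h1, h1)))
             (if c then dz else e (h1, h1)))"

text \<open>Counit: epsilon = 1 on all generators, hence on all basis monomials.\<close>
definition h8counit :: "hb \<Rightarrow> 'k::field" where
  "h8counit p = 1"

definition f_idem :: "nat \<Rightarrow> nat \<Rightarrow> hb \<Rightarrow> 'k::field" where
  "f_idem j k = vsc (1/4) (h8mult (vadd (e h1) (vsc ((-1) ^ j) (e hx)))
                                  (vadd (e h1) (vsc ((-1) ^ k) (e hy))))"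

definition tau3z :: "hb \<Rightarrow> 'k::field" where
  "tau3z = vsc (1/2) (\<lambda>r. e (False, False, True) r + e (True, False, True) r
                          + e (False, True, True) r - e (True, True, True) r)"

definition tau3b :: "hb \<Rightarrow> hb \<Rightarrow> 'k::field" where
  "tau3b p = (case p of (a, b, c) \<Rightarrow>
     h8mult (h8mult (if a then e hy else e h1) (if b then e hx else e h1))
            (if c then tau3z else e h1))"

definition tau3 :: "(hb \<Rightarrow> 'k::field) \<Rightarrow> hb \<Rightarrow> 'k" where
  "tau3 = lin tau3b"

text \<open>ybas: the basis; yact h b = h . b for basis elements h of H8;
  ycoact b = rho(b) in H8 \<otimes> V.\<close>
record ('k, 'b) ydm =
  ybas :: "'b set"
  yact :: "hb \<Rightarrow> 'b \<Rightarrow> 'b \<Rightarrow> 'k"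
  ycoact :: "'b \<Rightarrow> hb \<times> 'b \<Rightarrow> 'k"

text \<open>Action of x^a y^b z^c determined by the actions X, Y, Z of the generators.\<close>
definition gen_act :: "('b \<Rightarrow> 'b \<Rightarrow> 'k::field) \<Rightarrow> ('b \<Rightarrow> 'b \<Rightarrow> 'k) \<Rightarrow> ('b \<Rightarrow> 'b \<Rightarrow> 'k)
                       \<Rightarrow> hb \<Rightarrow> 'b \<Rightarrow> 'b \<Rightarrow> 'k" where
  "gen_act X Y Z p v = (case p of (a, b, c) \<Rightarrow>
     (if a then lin X else id) ((if b then lin Y else id) ((if c then lin Z else id) (e v))))"

definition Mbg :: "'k::field \<Rightarrow> hb \<Rightarrow> ('k, unit) ydm" where
  "Mbg b g = \<lparr> ybas = {()},
      yact = gen_act (\<lambda>v. vsc (b^2) (e v)) (\<lambda>v. vsc (b^2) (e v)) (\<lambda>v. vsc b (e v)),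
      ycoact = (\<lambda>v. e (g, v)) \<rparr>"

text \<open>M<(g1,g2)>, basis p1 = False, p2 = True.\<close>
definition Mpair :: "hb \<Rightarrow> hb \<Rightarrow> ('k::field, bool) ydm" where
  "Mpair g1 g2 = \<lparr> ybas = UNIV,
      yact = gen_act (\<lambda>v. if v then vsc (-1) (e True) else e False)
                     (\<lambda>v. if v then e True else vsc (-1) (e False))
                     (\<lambda>v. e (\<not> v)),
      ycoact = (\<lambda>v. if v then e (g2, True) else e (g1, False)) \<rparr>"

text \<open>W^{b1,-1}, basis p1 = False, p2 = True; i is the fixed square root of -1.\<close>
definition Wmod :: "'k::field \<Rightarrow> 'k \<Rightarrow> ('k, bool) ydm" where
  "Wmod i b1 = \<lparr> ybas = UNIV,
      yact = gen_act (\<lambda>v. if v then vsc (-1) (e True) else e False)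
                     (\<lambda>v. if v then vsc (-1) (e True) else e False)
                     (\<lambda>v. if v then vsc (i * b1) (e True) else vsc (-1) (e False)),
      ycoact = (\<lambda>v. if \<not> v then
          vadd (tens (h8mult (vsub (f_idem 0 0) (vsc (i * b1) (f_idem 1 1))) (e hz)) (e False))
               (tens (h8mult (vadd (f_idem 1 0) (vsc (i * b1) (f_idem 0 1))) (e hz)) (e True))
        else
          vadd (tens (h8mult (vadd (f_idem 0 0) (vsc (i * b1) (f_idem 1 1))) (e hz)) (e True))
               (tens (h8mult (vsub (f_idem 1 0) (vsc (i * b1) (f_idem 0 1))) (e hz)) (e False))) \<rparr>"

definition ydsum :: "('k::field, 'b) ydm \<Rightarrow> ('k, 'c) ydm \<Rightarrow> ('k, 'b + 'c) ydm" where
  "ydsum V W = \<lparr> ybas = Inl ` ybas V \<union> Inr ` ybas W,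
      yact = (\<lambda>h v. case v of Inl b \<Rightarrow> vmap Inl (yact V h b) | Inr c \<Rightarrow> vmap Inr (yact W h c)),
      ycoact = (\<lambda>v. case v of Inl b \<Rightarrow> vmap (\<lambda>(g, b'). (g, Inl b')) (ycoact V b)
                             | Inr c \<Rightarrow> vmap (\<lambda>(g, c'). (g, Inr c')) (ycoact W c)) \<rparr>"

definition ydpow :: "nat \<Rightarrow> ('k::field, 'b) ydm \<Rightarrow> ('k, nat \<times> 'b) ydm" where
  "ydpow n V = \<lparr> ybas = {(j, b). j < n \<and> b \<in> ybas V},
      yact = (\<lambda>h (j, b). vmap (\<lambda>b'. (j, b')) (yact V h b)),
      ycoact = (\<lambda>(j, b). vmap (\<lambda>(g, b'). (g, (j, b'))) (ycoact V b)) \<rparr>"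

definition Omega2 :: "'k::field \<Rightarrow> nat \<Rightarrow> nat \<Rightarrow> ('k, (nat \<times> unit) + ((nat \<times> unit) + bool)) ydm" where
  "Omega2 i n1 n2 = ydsum (ydpow n1 (Mbg i hx)) (ydsum (ydpow n2 (Mbg (-i) hx)) (Mpair hxy hx))"

definition Omega3 :: "'k::field \<Rightarrow> nat \<Rightarrow> nat \<Rightarrow> ('k, (nat \<times> unit) + ((nat \<times> unit) + bool)) ydm" where
  "Omega3 i n1 n2 = ydsum (ydpow n1 (Mbg i hy)) (ydsum (ydpow n2 (Mbg (-i) hy)) (Mpair hy hxy))"

definition Omega4 :: "'k::field \<Rightarrow> nat \<Rightarrow> nat \<Rightarrow> ('k, (nat \<times> unit) + ((nat \<times> unit) + bool)) ydm" where
  "Omega4 i n1 n2 = ydsum (ydpow n1 (Mbg i hx)) (ydsum (ydpow n2 (Mbg i hy)) (Wmod i 1))"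

definition Omega5 :: "'k::field \<Rightarrow> nat \<Rightarrow> nat \<Rightarrow> ('k, (nat \<times> unit) + ((nat \<times> unit) + bool)) ydm" where
  "Omega5 i n1 n2 = ydsum (ydpow n1 (Mbg (-i) hx)) (ydsum (ydpow n2 (Mbg (-i) hy)) (Wmod i (-1)))"

definition twist :: "((hb \<Rightarrow> 'k) \<Rightarrow> hb \<Rightarrow> 'k::field) \<Rightarrow> ('k, 'b) ydm \<Rightarrow> ('k, 'b) ydm" where
  "twist psi V = \<lparr> ybas = ybas V,
      yact = (\<lambda>h b. lin (\<lambda>h'. yact V h' b) (psi (e h))),
      ycoact = (\<lambda>b. lin (\<lambda>(g, c). tens (inv psi (e g)) (e c)) (ycoact V b)) \<rparr>"

definition Vsp :: "('k::field, 'b) ydm \<Rightarrow> ('b \<Rightarrow> 'k) set" where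
  "Vsp V = {v. \<forall>b. v b \<noteq> 0 \<longrightarrow> b \<in> ybas V}"

definition yd_iso :: "('k::field, 'b) ydm \<Rightarrow> ('k, 'c) ydm \<Rightarrow> bool" where
  "yd_iso V W \<longleftrightarrow> (\<exists>F :: 'b \<Rightarrow> 'c \<Rightarrow> 'k.
     (\<forall>b\<in>ybas V. F b \<in> Vsp W) \<and>
     bij_betw (lin F) (Vsp V) (Vsp W) \<and>
     (\<forall>h. \<forall>b\<in>ybas V. lin (yact W h) (F b) = lin F (yact V h b)) \<and>
     (\<forall>b\<in>ybas V. lin (\<lambda>(g, c). tens (e g) (F c)) (ycoact V b) = lin (ycoact W) (F b)))"

text \<open>Basis of T(V): words (lists) of basis elements of V.\<close>
definition TV :: "('k::field, 'b) ydm \<Rightarrow> ('b list \<Rightarrow> 'k) set" where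
  "TV V = {u. fsupp u \<and> (\<forall>w. u w \<noteq> 0 \<longrightarrow> set w \<subseteq> ybas V)}"

definition tmult :: "('b list \<Rightarrow> 'k::field) \<Rightarrow> ('b list \<Rightarrow> 'k) \<Rightarrow> 'b list \<Rightarrow> 'k" where
  "tmult u v = bil (\<lambda>w w'. e (w @ w')) u v"

text \<open>Diagonal H8-action on T(V): h.(v w) = (h1.v)(h2.w).\<close>
fun actT :: "('k::field, 'b) ydm \<Rightarrow> hb \<Rightarrow> 'b list \<Rightarrow> 'b list \<Rightarrow> 'k" where
  "actT V h [] = vsc (h8counit h) (e [])"
| "actT V h (b # w) = lin (\<lambda>(h1, h2). tmult (vmap (\<lambda>c. [c]) (yact V h1 b)) (actT V h2 w))
                          (h8comult h)"

text \<open>Codiagonal coaction on T(V): rho(v w) = v_{-1} w_{-1} \<otimes> v_0 w_0.\<close>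
fun coactT :: "('k::field, 'b) ydm \<Rightarrow> 'b list \<Rightarrow> hb \<times> 'b list \<Rightarrow> 'k" where
  "coactT V [] = e (h1, [])"
| "coactT V (b # w) = lin (\<lambda>(g, c). lin (\<lambda>(g', w'). tens (h8m g g') (e (c # w')))
                                         (coactT V w)) (ycoact V b)"

text \<open>Braided comultiplication of T(V): the algebra map T(V) -> T(V) \<otimes> T(V) (braided
  tensor product algebra, (a \<otimes> b)(a' \<otimes> b') = a (b_{-1}.a') \<otimes> b_0 b') with v primitive.
  Computed via Delta(v w) = (v \<otimes> 1 + 1 \<otimes> v) Delta(w).\<close>
fun comultT :: "('k::field, 'b) ydm \<Rightarrow> 'b list \<Rightarrow> 'b list \<times> 'b list \<Rightarrow> 'k" where
  "comultT V [] = e ([], [])"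
| "comultT V (b # w) =
     vadd (vmap (\<lambda>(a, c). (b # a, c)) (comultT V w))
          (lin (\<lambda>(a, c). lin (\<lambda>(g, d). tens (actT V g a) (e (d # c))) (ycoact V b))
               (comultT V w))"

definition counitT :: "'b list \<Rightarrow> 'k::field" where
  "counitT w = (if w = [] then 1 else 0)"

definition coideal_target :: "('b list \<Rightarrow> 'k::field) set \<Rightarrow> ('b list \<Rightarrow> 'k) set
                               \<Rightarrow> ('b list \<times> 'b list \<Rightarrow> 'k) set" where
  "coideal_target J T = lspan ({tens j t | j t. j \<in> J \<and> t \<in> T} \<union> {tens t j | j t. j \<in> J \<and> t \<in> T})"

definition nichols_admissible :: "('k::field, 'b) ydm \<Rightarrow> ('b list \<Rightarrow> 'k) set \<Rightarrow> bool" where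
  "nichols_admissible V J \<longleftrightarrow>
     J \<subseteq> TV V \<and> vzero \<in> J \<and>
     (\<forall>u\<in>J. \<forall>v\<in>J. vadd u v \<in> J) \<and> (\<forall>c. \<forall>u\<in>J. vsc c u \<in> J) \<and>
     (\<forall>u\<in>J. \<forall>n. (\<lambda>w. if length w = n then u w else 0) \<in> J) \<and>
     (\<forall>u\<in>J. \<forall>w. length w < 2 \<longrightarrow> u w = 0) \<and>
     (\<forall>u\<in>J. \<forall>a\<in>TV V. \<forall>b\<in>TV V. tmult (tmult a u) b \<in> J) \<and>
     (\<forall>u\<in>J. lin (comultT V) u \<in> coideal_target J (TV V))"

text \<open>I(V): the largest N-graded ideal and coideal contained in T^{>=2}(V);
  the Nichols algebra is B(V) = T(V)/I(V).\<close>
definition nichols_ideal :: "('k::field, 'b) ydm \<Rightarrow> ('b list \<Rightarrow> 'k) set" where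
  "nichols_ideal V = \<Union>{J. nichols_admissible V J}"

section \<open>Bosonization B(V) # H8, realised as (T(V) # H8) / (I(V) \<otimes> H8)\<close>

definition BV :: "('k::field, 'b) ydm \<Rightarrow> ('b list \<times> hb \<Rightarrow> 'k) set" where
  "BV V = {u. fsupp u \<and> (\<forall>w h. u (w, h) \<noteq> 0 \<longrightarrow> set w \<subseteq> ybas V)}"

definition bbasis :: "('k::field, 'b) ydm \<Rightarrow> ('b list \<times> hb) set" where
  "bbasis V = {(w, h). set w \<subseteq> ybas V}"

text \<open>I(V) \<otimes> H8.\<close>
definition NV :: "('k::field, 'b) ydm \<Rightarrow> ('b list \<times> hb \<Rightarrow> 'k) set" where
  "NV V = {u \<in> BV V. \<forall>h. (\<lambda>w. u (w, h)) \<in> nichols_ideal V}"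

definition ptens :: "('b list \<Rightarrow> 'k::field) \<Rightarrow> (hb \<Rightarrow> 'k) \<Rightarrow> 'b list \<times> hb \<Rightarrow> 'k" where
  "ptens u v = (\<lambda>(w, h). u w * v h)"

text \<open>(a#h)(a'#h') = a (h1.a') # h2 h'.\<close>
definition bm :: "('k::field, 'b) ydm \<Rightarrow> 'b list \<times> hb \<Rightarrow> 'b list \<times> hb \<Rightarrow> 'b list \<times> hb \<Rightarrow> 'k" where
  "bm V p q = (case p of (w, h) \<Rightarrow> case q of (w', h') \<Rightarrow>
     lin (\<lambda>(h1, h2). ptens (tmult (e w) (actT V h1 w')) (h8m h2 h')) (h8comult h))"

definition bmult :: "('k::field, 'b) ydm \<Rightarrow> ('b list \<times> hb \<Rightarrow> 'k) \<Rightarrow> ('b list \<times> hb \<Rightarrow> 'k)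
                     \<Rightarrow> 'b list \<times> hb \<Rightarrow> 'k" where
  "bmult V u v = bil (bm V) u v"

definition bunit :: "'b list \<times> hb \<Rightarrow> 'k::field" where
  "bunit = e ([], h1)"

text \<open>Delta(a#h) = a^(1) # (a^(2))_{-1} h_(1) \<otimes> (a^(2))_(0) # h_(2).\<close>
definition bc :: "('k::field, 'b) ydm \<Rightarrow> 'b list \<times> hb \<Rightarrow> ('b list \<times> hb) \<times> ('b list \<times> hb) \<Rightarrow> 'k" where
  "bc V p = (case p of (w, h) \<Rightarrow>
     lin (\<lambda>(a1, a2). lin (\<lambda>(g, a2'). lin (\<lambda>(h1, h2).
            tens (ptens (e a1) (h8m g h1)) (e (a2', h2)))
          (h8comult h)) (coactT V a2)) (comultT V w))"

definition bcounit :: "'b list \<times> hb \<Rightarrow> 'k::field" where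
  "bcounit p = (case p of (w, h) \<Rightarrow> counitT w * h8counit h)"

text \<open>Isomorphism of Hopf algebras B(V)#H8 ~ B(W)#H8: a linear map
  F : T(V)#H8 -> T(W)#H8 inducing a linear bijection of the quotients by I \<otimes> H8
  which is multiplicative, unital, comultiplicative and counital on the quotients
  (a bialgebra isomorphism between Hopf algebras is a Hopf algebra isomorphism).\<close>
definition bos_iso :: "('k::field, 'b) ydm \<Rightarrow> ('k, 'c) ydm \<Rightarrow> bool" where
  "bos_iso V W \<longleftrightarrow> (\<exists>F :: 'b list \<times> hb \<Rightarrow> 'c list \<times> hb \<Rightarrow> 'k.
     (\<forall>p\<in>bbasis V. F p \<in> BV W) \<and>
     (\<forall>u\<in>NV V. lin F u \<in> NV W) \<and>
     (\<forall>u\<in>BV V. lin F u \<in> NV W \<longrightarrow> u \<in> NV V) \<and>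
     (\<forall>u'\<in>BV W. \<exists>u\<in>BV V. vsub (lin F u) u' \<in> NV W) \<and>
     vsub (lin F bunit) bunit \<in> NV W \<and>
     (\<forall>p\<in>bbasis V. \<forall>q\<in>bbasis V. vsub (lin F (bm V p q)) (bmult W (F p) (F q)) \<in> NV W) \<and>
     (\<forall>p\<in>bbasis V. vsub (lin (bc W) (F p)) (lin (\<lambda>(p1, p2). tens (F p1) (F p2)) (bc V p))
        \<in> lspan ({tens n a | n a. n \<in> NV W \<and> a \<in> BV W} \<union> {tens a n | n a. n \<in> NV W \<and> a \<in> BV W})) \<and>
     (\<forall>p\<in>bbasis V. lin (\<lambda>q (_::unit). bcounit q) (F p) () = bcounit p))"

end

theory Submission
  imports Defs
begin

lemma lin_apply: "lin f u q = (\<Sum>p\<in>{p. u p \<noteq> 0}. u p * f p q)"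
  by (simp add: lin_def)

lemma lin_superset:
  assumes "finite S" "{p. u p \<noteq> 0} \<subseteq> S"
  shows "lin f u q = (\<Sum>p\<in>S. u p * f p q)"
  unfolding lin_apply using assms
  by (intro sum.mono_neutral_left) auto

lemma fsupp_fin[simp]: "fsupp (u :: 'a::finite \<Rightarrow> 'b::zero)"
  by (simp add: fsupp_def)

lemma lin_fin: "lin f (u :: 'a::finite \<Rightarrow> 'k::field) q = (\<Sum>p\<in>UNIV. u p * f p q)"
  by (rule lin_superset) auto

lemma fsupp_e[simp]: "fsupp (e p :: _ \<Rightarrow> 'k::field)"
  unfolding fsupp_def e_def by (rule finite_subset[of _ "{p}"]) auto

lemma fsupp_vadd[simp]: "fsupp u \<Longrightarrow> fsupp v \<Longrightarrow> fsupp (vadd u v)"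
  unfolding fsupp_def vadd_def
  by (rule finite_subset[of _ "{p. u p \<noteq> 0} \<union> {p. v p \<noteq> 0}"]) auto

lemma fsupp_vsub[simp]: "fsupp u \<Longrightarrow> fsupp v \<Longrightarrow> fsupp (vsub u v)"
  unfolding fsupp_def vsub_def
  by (rule finite_subset[of _ "{p. u p \<noteq> 0} \<union> {p. v p \<noteq> 0}"]) auto

lemma fsupp_vsc[simp]: "fsupp u \<Longrightarrow> fsupp (vsc c u)"
  unfolding fsupp_def vsc_def
  by (rule finite_subset[of _ "{p. u p \<noteq> 0}"]) auto

lemma fsupp_vzero[simp]: "fsupp (vzero :: _ \<Rightarrow> 'k::field)"
  by (simp add: fsupp_def vzero_def)

lemma fsupp_zero[simp]: "fsupp (\<lambda>p. 0 :: 'k::field)"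
  by (simp add: fsupp_def)

lemma fsupp_lin[simp]:
  assumes "fsupp u" "\<And>p. u p \<noteq> 0 \<Longrightarrow> fsupp (f p)"
  shows "fsupp (lin f u)"
proof -
  let ?S = "{p. u p \<noteq> 0}"
  have fin: "finite ?S" using assms(1) by (simp add: fsupp_def)
  have "{q. lin f u q \<noteq> 0} \<subseteq> (\<Union>p\<in>?S. {q. f p q \<noteq> 0})"
  proof
    fix q assume "q \<in> {q. lin f u q \<noteq> 0}"
    then have "(\<Sum>p\<in>?S. u p * f p q) \<noteq> 0" by (simp add: lin_apply)
    then obtain p where "p \<in> ?S" "u p * f p q \<noteq> 0" by (meson sum.neutral)
    then show "q \<in> (\<Union>p\<in>?S. {q. f p q \<noteq> 0})" by auto
  qed
  moreover have "finite (\<Union>p\<in>?S. {q. f p q \<noteq> 0})"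
    using fin assms(2) by (auto simp: fsupp_def)
  ultimately show ?thesis unfolding fsupp_def by (rule finite_subset)
qed

lemma lin_e[simp]: "lin f (e p) = f p"
proof
  fix q
  have "lin f (e p) q = (\<Sum>p'\<in>{p}. e p p' * f p' q)"
    by (rule lin_superset) (auto simp: e_def)
  then show "lin f (e p) q = f p q" by (simp add: e_def)
qed

lemma lin_vadd:
  assumes "fsupp u" "fsupp v"
  shows "lin f (vadd u v) = vadd (lin f u) (lin f v)"
proof
  fix q
  let ?S = "{p. u p \<noteq> 0} \<union> {p. v p \<noteq> 0}"
  have fin: "finite ?S" using assms by (simp add: fsupp_def)
  have 1: "lin f (vadd u v) q = (\<Sum>p\<in>?S. vadd u v p * f p q)"
    by (rule lin_superset[OF fin]) (auto simp: vadd_def)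
  have 2: "lin f u q = (\<Sum>p\<in>?S. u p * f p q)" by (rule lin_superset[OF fin]) auto
  have 3: "lin f v q = (\<Sum>p\<in>?S. v p * f p q)" by (rule lin_superset[OF fin]) auto
  have "vadd (lin f u) (lin f v) q = lin f u q + lin f v q" by (simp add: vadd_def)
  then show "lin f (vadd u v) q = vadd (lin f u) (lin f v) q"
    using 1 2 3 by (simp add: vadd_def sum.distrib distrib_right)
qed

lemma lin_vsub:
  assumes "fsupp u" "fsupp v"
  shows "lin f (vsub u v) = vsub (lin f u) (lin f v)"
proof
  fix q
  let ?S = "{p. u p \<noteq> 0} \<union> {p. v p \<noteq> 0}"
  have fin: "finite ?S" using assms by (simp add: fsupp_def)
  have 1: "lin f (vsub u v) q = (\<Sum>p\<in>?S. vsub u v p * f p q)"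
    by (rule lin_superset[OF fin]) (auto simp: vsub_def)
  have 2: "lin f u q = (\<Sum>p\<in>?S. u p * f p q)" by (rule lin_superset[OF fin]) auto
  have 3: "lin f v q = (\<Sum>p\<in>?S. v p * f p q)" by (rule lin_superset[OF fin]) auto
  show "lin f (vsub u v) q = vsub (lin f u) (lin f v) q"
    using 1 2 3 by (simp add: vsub_def sum_subtractf left_diff_distrib)
qed

lemma lin_vsc: "lin f (vsc c u) = vsc c (lin f u)"
proof (cases "c = 0")
  case True then show ?thesis by (simp add: lin_def vsc_def)
next
  case False
  then have "{p. vsc c u p \<noteq> 0} = {p. u p \<noteq> 0}" by (auto simp: vsc_def)
  then show ?thesis using False
    by (simp add: lin_def vsc_def sum_distrib_left mult.assoc)
qed

lemma lin_vzero[simp]: "lin f vzero = vzero"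
  by (simp add: lin_def vzero_def)

lemma lin_zero[simp]: "lin f (\<lambda>p. 0) = (\<lambda>q. 0)"
  by (simp add: lin_def)

lemma lin_fadd: "lin (\<lambda>p. vadd (f p) (g p)) u = vadd (lin f u) (lin g u)"
  by (simp add: lin_def vadd_def fun_eq_iff sum.distrib distrib_left)

lemma lin_fsub: "lin (\<lambda>p. vsub (f p) (g p)) u = vsub (lin f u) (lin g u)"
  by (simp add: lin_def vsub_def fun_eq_iff sum_subtractf right_diff_distrib)

lemma lin_fsc: "lin (\<lambda>p. vsc c (f p)) u = vsc c (lin f u)"
  by (simp add: lin_def vsc_def fun_eq_iff sum_distrib_left mult_ac)

lemma lin_fzero[simp]: "lin (\<lambda>p. \<lambda>q. 0) u = (\<lambda>q. 0)"
  by (simp add: lin_def)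

lemma lin_cong:
  assumes "\<And>p. u p \<noteq> 0 \<Longrightarrow> f p = g p"
  shows "lin f u = lin g u"
  using assms by (simp add: lin_def fun_eq_iff)

lemma lin_id: "fsupp u \<Longrightarrow> lin e u = u"
proof
  fix q assume "fsupp u"
  show "lin e u q = u q"
  proof (cases "u q = 0")
    case True
    then show ?thesis by (auto simp: lin_def e_def intro!: sum.neutral)
  next
    case False
    have "lin e u q = (\<Sum>p\<in>{p. u p \<noteq> 0}. u p * (if q = p then 1 else 0))"
      by (simp add: lin_apply e_def)
    also have "\<dots> = (\<Sum>p\<in>{p. u p \<noteq> 0}. if p = q then u q else 0)"
      by (rule sum.cong) auto
    also have "\<dots> = u q" using False \<open>fsupp u\<close> by (simp add: fsupp_def)
    finally show ?thesis .
  qed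
qed

lemma lin_lin:
  assumes u: "fsupp u" and g: "\<And>p. u p \<noteq> 0 \<Longrightarrow> fsupp (g p)"
  shows "lin f (lin g u) = lin (\<lambda>p. lin f (g p)) u"
proof
  fix r
  let ?S = "{p. u p \<noteq> 0}"
  let ?T = "\<Union>p\<in>?S. {q. g p q \<noteq> 0}"
  have finS: "finite ?S" using u by (simp add: fsupp_def)
  have finT: "finite ?T" using finS g by (auto simp: fsupp_def)
  have sub: "{q. lin g u q \<noteq> 0} \<subseteq> ?T"
  proof
    fix q assume "q \<in> {q. lin g u q \<noteq> 0}"
    then have "(\<Sum>p\<in>?S. u p * g p q) \<noteq> 0" by (simp add: lin_apply)
    then obtain p where "p \<in> ?S" "u p * g p q \<noteq> 0" by (meson sum.neutral)
    then show "q \<in> ?T" by auto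
  qed
  have "lin f (lin g u) r = (\<Sum>q\<in>?T. lin g u q * f q r)"
    by (rule lin_superset[OF finT sub])
  also have "\<dots> = (\<Sum>q\<in>?T. (\<Sum>p\<in>?S. u p * g p q) * f q r)"
    by (simp add: lin_apply)
  also have "\<dots> = (\<Sum>p\<in>?S. u p * (\<Sum>q\<in>?T. g p q * f q r))"
    by (simp add: sum_distrib_right sum_distrib_left mult_ac sum.swap[of _ ?T])
  also have "\<dots> = (\<Sum>p\<in>?S. u p * lin f (g p) r)"
  proof (rule sum.cong[OF refl])
    fix p assume "p \<in> ?S"
    then have "lin f (g p) r = (\<Sum>q\<in>?T. g p q * f q r)"
      by (intro lin_superset finT) auto
    then show "u p * (\<Sum>q\<in>?T. g p q * f q r) = u p * lin f (g p) r" by simp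
  qed
  also have "\<dots> = lin (\<lambda>p. lin f (g p)) u r" by (simp add: lin_apply)
  finally show "lin f (lin g u) r = lin (\<lambda>p. lin f (g p)) u r" .
qed

lemma lin_swap:
  assumes "fsupp u" "fsupp v"
  shows "lin (\<lambda>p. lin (K p) v) u = lin (\<lambda>q. lin (\<lambda>p. K p q) u) v"
proof
  fix r
  let ?S = "{p. u p \<noteq> 0}" and ?T = "{q. v q \<noteq> 0}"
  have fS: "finite ?S" and fT: "finite ?T" using assms by (auto simp: fsupp_def)
  show "lin (\<lambda>p. lin (K p) v) u r = lin (\<lambda>q. lin (\<lambda>p. K p q) u) v r"
    by (simp add: lin_apply sum_distrib_left sum_distrib_right mult_ac sum.swap[of _ ?S])
qed

lemma tens_e[simp]: "tens (e p) (e q) = (e (p, q) :: _ \<Rightarrow> 'k::field)"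
  by (auto simp: tens_def e_def fun_eq_iff)

lemma fsupp_tens[simp]:
  assumes "fsupp u" "fsupp v" shows "fsupp (tens u v)"
proof -
  have "{pq. tens u v pq \<noteq> 0} \<subseteq> {p. u p \<noteq> 0} \<times> {q. v q \<noteq> 0}"
    by (auto simp: tens_def)
  then show ?thesis using assms unfolding fsupp_def by (auto intro: finite_subset)
qed

lemma lin_tens:
  assumes "fsupp u" "fsupp v"
  shows "lin h (tens u v) = lin (\<lambda>p. lin (\<lambda>q. h (p, q)) v) u"
proof
  fix r
  let ?S = "{p. u p \<noteq> 0}" and ?T = "{q. v q \<noteq> 0}"
  have fS: "finite ?S" and fT: "finite ?T" using assms by (auto simp: fsupp_def)
  have "lin h (tens u v) r = (\<Sum>pq\<in>?S \<times> ?T. tens u v pq * h pq r)"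
    by (rule lin_superset) (use fS fT in \<open>auto simp: tens_def\<close>)
  also have "\<dots> = (\<Sum>p\<in>?S. \<Sum>q\<in>?T. u p * v q * h (p, q) r)"
    by (simp add: sum.cartesian_product tens_def split_def)
  also have "\<dots> = lin (\<lambda>p. lin (\<lambda>q. h (p, q)) v) u r"
    by (simp add: lin_apply sum_distrib_left mult_ac)
  finally show "lin h (tens u v) r = lin (\<lambda>p. lin (\<lambda>q. h (p, q)) v) u r" .
qed

lemma tens_lin:
  assumes "fsupp u" "fsupp v"
  shows "tens (lin f u) (lin g v) = lin (\<lambda>p. lin (\<lambda>q. tens (f p) (g q)) v) u"
  by (rule ext) (auto simp: tens_def lin_apply sum_product sum_distrib_left mult_ac intro: sum.swap)

lemma tens_vadd1: "tens (vadd u u') v = vadd (tens u v) (tens u' v)"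
  by (auto simp: tens_def vadd_def fun_eq_iff distrib_right)
lemma tens_vadd2: "tens u (vadd v v') = vadd (tens u v) (tens u v')"
  by (auto simp: tens_def vadd_def fun_eq_iff distrib_left)
lemma tens_vsub1: "tens (vsub u u') v = vsub (tens u v) (tens u' v)"
  by (auto simp: tens_def vsub_def fun_eq_iff left_diff_distrib)
lemma tens_vsub2: "tens u (vsub v v') = vsub (tens u v) (tens u v')"
  by (auto simp: tens_def vsub_def fun_eq_iff right_diff_distrib)
lemma tens_vsc1: "tens (vsc c u) v = vsc c (tens u v)"
  by (auto simp: tens_def vsc_def fun_eq_iff mult_ac)
lemma tens_vsc2: "tens u (vsc c v) = vsc c (tens u v)"
  by (auto simp: tens_def vsc_def fun_eq_iff mult_ac)

lemma ptens_tens: "ptens = tens"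
  by (auto simp: ptens_def tens_def fun_eq_iff)

lemma bil_e1[simp]: "bil f (e p) v = lin (f p) v" by (simp add: bil_def)

lemma bil_e[simp]: "bil f (e p) (e q) = f p q" by (simp add: bil_def)

lemma lin_const_fin: "lin (\<lambda>p. v) (u :: 'a::finite \<Rightarrow> 'k::field) = vsc (\<Sum>p\<in>UNIV. u p) v"
  by (simp add: lin_fin vsc_def fun_eq_iff sum_distrib_right)

lemma lin_lin_pair:
  assumes "fsupp u" "\<And>a b. u (a, b) \<noteq> 0 \<Longrightarrow> fsupp (g a b)"
  shows "lin f (lin (\<lambda>(a, b). g a b) u) = lin (\<lambda>(a, b). lin f (g a b)) u"
proof -
  have "lin f (lin (\<lambda>(a, b). g a b) u) = lin (\<lambda>p. lin f ((\<lambda>(a, b). g a b) p)) u"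
    by (rule lin_lin) (use assms in \<open>auto split: prod.splits\<close>)
  also have "\<dots> = lin (\<lambda>(a, b). lin f (g a b)) u"
    by (rule lin_cong) (auto split: prod.splits)
  finally show ?thesis .
qed

lemma tmult_e[simp]: "tmult (e a) (e b) = (e (a @ b) :: _ \<Rightarrow> 'k::field)"
  by (simp add: tmult_def)

lemma fsupp_tmult[simp]: "fsupp u \<Longrightarrow> fsupp v \<Longrightarrow> fsupp (tmult u v)"
  by (simp add: tmult_def bil_def)

lemma tmult_vsc1: "tmult (vsc c u) v = vsc c (tmult u v)"
  by (simp add: tmult_def bil_def lin_vsc)

lemma tmult_vsc2: "tmult u (vsc c v) = vsc c (tmult u v)"
  by (simp add: tmult_def bil_def lin_vsc lin_fsc)

lemma tmult_lin1:
  assumes "fsupp u" "\<And>p. u p \<noteq> 0 \<Longrightarrow> fsupp (f p)"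
  shows "tmult (lin f u) v = lin (\<lambda>p. tmult (f p) v) u"
  unfolding tmult_def bil_def by (rule lin_lin[OF assms])

lemma tmult_lin2:
  assumes "fsupp u" "fsupp v" "\<And>q. v q \<noteq> 0 \<Longrightarrow> fsupp (g q)"
  shows "tmult u (lin g v) = lin (\<lambda>q. tmult u (g q)) v"
proof -
  have "tmult u (lin g v) = lin (\<lambda>s. lin (\<lambda>q. lin (\<lambda>w'. e (s @ w')) (g q)) v) u"
    unfolding tmult_def bil_def
    by (rule lin_cong) (rule lin_lin[OF assms(2,3)])
  also have "\<dots> = lin (\<lambda>q. lin (\<lambda>s. lin (\<lambda>w'. e (s @ w')) (g q)) u) v"
    by (rule lin_swap[OF assms(1,2)])
  also have "\<dots> = lin (\<lambda>q. tmult u (g q)) v"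
    by (simp add: tmult_def bil_def)
  finally show ?thesis .
qed

lemma tmult_vadd1: "fsupp u \<Longrightarrow> fsupp u' \<Longrightarrow> tmult (vadd u u') v = vadd (tmult u v) (tmult u' v)"
  by (simp add: tmult_def bil_def lin_vadd)

lemma tmult_vadd2: "fsupp v \<Longrightarrow> fsupp v' \<Longrightarrow> tmult u (vadd v v') = vadd (tmult u v) (tmult u v')"
  by (simp add: tmult_def bil_def lin_vadd lin_fadd)

lemma tmult_vsub1: "fsupp u \<Longrightarrow> fsupp u' \<Longrightarrow> tmult (vsub u u') v = vsub (tmult u v) (tmult u' v)"
  by (simp add: tmult_def bil_def lin_vsub)

lemma tmult_vsub2: "fsupp v \<Longrightarrow> fsupp v' \<Longrightarrow> tmult u (vsub v v') = vsub (tmult u v) (tmult u v')"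
  by (simp add: tmult_def bil_def lin_vsub lin_fsub)

lemma tmult_assoc:
  assumes "fsupp u" "fsupp v" "fsupp w"
  shows "tmult (tmult u v) w = tmult u (tmult v w)"
proof -
  have "tmult (tmult u v) w = lin (\<lambda>p. tmult (lin (\<lambda>q. e (p @ q)) v) w) u"
    unfolding tmult_def[of u v] bil_def
    by (rule tmult_lin1) (use assms in auto)
  also have "\<dots> = lin (\<lambda>p. lin (\<lambda>q. tmult (e (p @ q)) w) v) u"
    by (rule lin_cong) (rule tmult_lin1, use assms in auto)
  also have "\<dots> = lin (\<lambda>p. lin (\<lambda>q. lin (\<lambda>r. e (p @ q @ r)) w) v) u"
    by (simp add: tmult_def bil_def)
  also have "\<dots> = lin (\<lambda>p. tmult (e p) (tmult v w)) u"
  proof (rule lin_cong)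
    fix p
    have "tmult (e p) (tmult v w) = lin (\<lambda>q. tmult (e p) (lin (\<lambda>r. e (q @ r)) w)) v"
      unfolding tmult_def[of v w] bil_def
      by (rule tmult_lin2) (use assms in auto)
    also have "\<dots> = lin (\<lambda>q. lin (\<lambda>r. e (p @ q @ r)) w) v"
      by (rule lin_cong, subst tmult_lin2) (use assms in auto)
    finally show "lin (\<lambda>q. lin (\<lambda>r. e (p @ q @ r)) w) v = tmult (e p) (tmult v w)" by simp
  qed
  also have "\<dots> = tmult u (tmult v w)"
    by (subst tmult_lin1[symmetric]) (use assms in \<open>auto simp: lin_id\<close>)
  finally show ?thesis .
qed

lemma vmap_e[simp]: "vmap f (e p) = (e (f p) :: _ \<Rightarrow> 'k::field)"
  by (simp add: vmap_def)

lemma fsupp_vmap[simp]: "fsupp u \<Longrightarrow> fsupp (vmap f u)"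
  by (simp add: vmap_def)

lemma vmap_vsc: "vmap f (vsc c u) = vsc c (vmap f u)"
  by (simp add: vmap_def lin_vsc)

lemma vmap_lin:
  assumes "fsupp u" "\<And>p. u p \<noteq> 0 \<Longrightarrow> fsupp (g p)"
  shows "vmap f (lin g u) = lin (\<lambda>p. vmap f (g p)) u"
  unfolding vmap_def by (rule lin_lin[OF assms])

lemma lin_vmap:
  assumes "fsupp u"
  shows "lin g (vmap f u) = lin (\<lambda>p. g (f p)) u"
  unfolding vmap_def by (subst lin_lin) (use assms in auto)

lemma vmap_inj_apply:
  assumes "fsupp u" "inj f"
  shows "vmap f u (f p) = u p"
proof (cases "u p = 0")
  case True
  then show ?thesis using assms(2) by (auto simp: vmap_def lin_apply e_def inj_eq intro!: sum.neutral)
next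
  case False
  have "vmap f u (f p) = (\<Sum>q\<in>{q. u q \<noteq> 0}. if q = p then u p else 0)"
    unfolding vmap_def lin_apply e_def using assms(2) by (intro sum.cong) (auto simp: inj_eq)
  then show ?thesis using False assms(1) by (simp add: fsupp_def)
qed

lemma vmap_notin:
  assumes "y \<notin> range f"
  shows "vmap f u y = 0"
  using assms by (auto simp: vmap_def lin_apply e_def intro!: sum.neutral)


lemma sum_prod_UNIV: "(\<Sum>x\<in>(UNIV::('a::finite \<times> 'b::finite) set). f x) = (\<Sum>a\<in>UNIV. \<Sum>b\<in>UNIV. f (a, b))"
  unfolding UNIV_Times_UNIV[symmetric] sum.cartesian_product by simp

lemma sum_bool: "(\<Sum>x\<in>(UNIV::bool set). f x) = f False + f True"
  by (simp add: UNIV_bool)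

lemma sum_hb: "(\<Sum>x\<in>(UNIV::hb set). f x) =
  f (False,False,False) + f (False,False,True) + f (False,True,False) + f (False,True,True) +
  f (True,False,False) + f (True,False,True) + f (True,True,False) + f (True,True,True)"
  by (simp add: sum_prod_UNIV sum_bool add_ac)

definition T3C :: "hb \<Rightarrow> hb \<Rightarrow> 'k::field_char_0" where
  "T3C p q = (case p of (a, b, c) \<Rightarrow> case q of (a2, b2, c2) \<Rightarrow>
     if c2 \<noteq> c then 0 else if c then (if a2 \<noteq> b \<and> b2 \<noteq> a then -1/2 else 1/2)
     else (if a2 = b \<and> b2 = a then 1 else 0))"

lemma tau3b_T3C: "tau3b (a,b,c) (a2,b2,c2) = (T3C (a,b,c) (a2,b2,c2) :: 'k::field_char_0)"
  by (cases a; cases b; cases c; cases a2; cases b2; cases c2;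
      simp add: tau3b_def T3C_def h8mult_def bil_def lin_fin sum_hb h8m_def e_def vsc_def tau3z_def
        hx_def hy_def h1_def Let_def)

definition MC :: "hb \<Rightarrow> hb \<Rightarrow> hb \<Rightarrow> 'k::field_char_0" where
  "MC p q r = (case p of (a, b, c) \<Rightarrow> case q of (a2, b2, c2) \<Rightarrow> case r of (r1, r2, r3) \<Rightarrow>
     if \<not> c then (if r = (a \<noteq> a2, b \<noteq> b2, c2) then 1 else 0)
     else if \<not> c2 then (if r = (a \<noteq> b2, b \<noteq> a2, True) then 1 else 0)
     else if r3 then 0 else if r1 \<noteq> (a \<noteq> b2) \<and> r2 \<noteq> (b \<noteq> a2) then -1/2 else 1/2)"

lemma h8m_MC0: "h8m (a,b,c) (a2,b2,c2) (r1,r2,r3) = (MC (a,b,c) (a2,b2,c2) (r1,r2,r3) :: 'k::field_char_0)"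
  by (cases a; cases b; cases c; cases a2; cases b2; cases c2; cases r1; cases r2; cases r3; simp add: h8m_def MC_def e_def vsc_def Let_def)

lemma h8m_MC: "h8m = (MC :: _ \<Rightarrow> _ \<Rightarrow> _ \<Rightarrow> 'k::field_char_0)"
  by (intro ext) (metis h8m_MC0 prod_cases3)

lemma tau3b_eq: "tau3b = (T3C :: _ \<Rightarrow> _ \<Rightarrow> 'k::field_char_0)"
  by (intro ext) (metis tau3b_T3C prod_cases3)

lemma tau3_mult0: "lin tau3b (h8m (a,b,c) (a2,b2,c2)) (r1,r2,r3) = (h8mult (tau3b (a,b,c)) (tau3b (a2,b2,c2)) (r1,r2,r3) :: 'k::field_char_0)"
  unfolding h8mult_def bil_def lin_fin h8m_MC tau3b_eq
  by (cases a; cases b; cases c; cases a2; cases b2; cases c2; cases r1; cases r2; cases r3;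
      simp add: sum_hb MC_def T3C_def)

definition DC :: "hb \<Rightarrow> hb \<times> hb \<Rightarrow> 'k::field_char_0" where
  "DC p PQ = (case p of (a, b, c) \<Rightarrow> case PQ of ((a1, b1, c1), (a2, b2, c2)) \<Rightarrow>
     if \<not> c then (if (a1, b1, c1) = (a, b, False) \<and> (a2, b2, c2) = (a, b, False) then 1 else 0)
     else if c1 \<and> c2 \<and> a1 = a \<and> b2 = b then (if b1 \<noteq> b \<and> a2 \<noteq> a then -1/2 else 1/2) else 0)"

lemma lam4: "(\<lambda>r. e a r + e b r + e c r - e d r) = vsub (vadd (vadd (e a) (e b)) (e c)) (e d)"
  by (simp add: vsub_def vadd_def)

lemma dz_eq: "(dz :: _ \<Rightarrow> 'k::field_char_0) = vsc (1/2) (vsub (vadd (vadd (e (hz,hz)) (e (hz,(True,False,True))))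
     (e ((False,True,True),hz))) (e ((False,True,True),(True,False,True))))"
  unfolding dz_def h8tmult_def lam4 bil_def
  by (simp add: lin_vsc lin_vadd lin_vsub h8m_def h1_def hx_def hy_def hz_def Let_def)

lemma h8comult_DC0: "h8comult (a,b,c) ((a1,b1,c1),(a2,b2,c2)) = (DC (a,b,c) ((a1,b1,c1),(a2,b2,c2)) :: 'k::field_char_0)"
  apply (cases a; cases b; cases c)
  apply (simp_all add: h8comult_def h8tmult_def dz_eq lin_vsc lin_vadd lin_vsub h8m_def h1_def hx_def hy_def hz_def Let_def)
  apply (cases a1; cases b1; cases c1; cases a2; cases b2; cases c2; simp add: DC_def e_def vsc_def vadd_def vsub_def)+
  done

lemma h8comult_DC: "h8comult = (DC :: _ \<Rightarrow> _ \<Rightarrow> 'k::field_char_0)"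
  by (intro ext) (metis h8comult_DC0 prod_cases3 prod.exhaust)

lemma tau3_comult0: "lin (\<lambda>(p, q). tens (tau3b p) (tau3b q)) (h8comult (a,b,c)) ((a1,b1,c1),(a2,b2,c2))
   = (lin h8comult (tau3b (a,b,c)) ((a1,b1,c1),(a2,b2,c2)) :: 'k::field_char_0)"
  unfolding lin_fin h8comult_DC tau3b_eq
  by (cases a; cases b; cases c; cases a1; cases b1; cases c1; cases a2; cases b2; cases c2;
      simp add: sum_prod_UNIV sum_bool DC_def T3C_def tens_def)

lemma tau3_invol0: "lin tau3b (tau3b (a,b,c)) (a1,b1,c1) = (e (a,b,c) (a1,b1,c1) :: 'k::field_char_0)"
  unfolding lin_fin tau3b_eq
  by (cases a; cases b; cases c; cases a1; cases b1; cases c1; simp add: sum_hb T3C_def e_def)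

lemma tau3_counit0: "(\<Sum>q\<in>UNIV. tau3b (a,b,c) q) = (1 :: 'k::field_char_0)"
  unfolding tau3b_eq
  by (cases a; cases b; cases c; simp add: sum_hb T3C_def)

lemma tau3_invol: "lin tau3b (tau3b p) = (e p :: _ \<Rightarrow> 'k::field_char_0)"
  by (intro ext) (metis tau3_invol0 prod_cases3)

lemma tau3_mult: "lin tau3b (h8m p q) = (h8mult (tau3b p) (tau3b q) :: _ \<Rightarrow> 'k::field_char_0)"
  by (intro ext) (metis tau3_mult0 prod_cases3)

lemma tau3_comult: "lin (\<lambda>(p, q). tens (tau3b p) (tau3b q)) (h8comult r) = (lin h8comult (tau3b r) :: _ \<Rightarrow> 'k::field_char_0)"
  by (intro ext) (metis tau3_comult0 prod_cases3 prod.exhaust)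

lemma tau3_counit: "(\<Sum>q\<in>UNIV. tau3b p q) = (1 :: 'k::field_char_0)"
  by (metis tau3_counit0 prod_cases3)

lemma tau3_unit: "tau3b h1 = (e h1 :: _ \<Rightarrow> 'k::field_char_0)"
  unfolding tau3b_eq by (intro ext) (auto simp: T3C_def e_def h1_def split: if_splits)

lemma tau3_tau3: "tau3 (tau3 u) = (u :: _ \<Rightarrow> 'k::field_char_0)"
proof -
  have "tau3 (tau3 u) = lin (\<lambda>p. lin tau3b (tau3b p)) u"
    unfolding tau3_def by (rule lin_lin) auto
  also have "\<dots> = lin e u" by (simp add: tau3_invol)
  finally show ?thesis by (simp add: lin_id)
qed

lemma inv_tau3: "inv tau3 = (tau3 :: (hb \<Rightarrow> 'k::field_char_0) \<Rightarrow> _)"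
  by (rule inv_unique_comp) (auto simp: fun_eq_iff tau3_tau3)


lemma vsc_one[simp]: "vsc 1 u = u" by (simp add: vsc_def)
lemma vsc_vsc[simp]: "vsc a (vsc b u) = vsc (a * b) u" by (simp add: vsc_def mult.assoc)

lemma lin_fsc_pair: "lin (\<lambda>(x, y). vsc c (f x y)) u = vsc c (lin (\<lambda>(x, y). f x y) u)"
  using lin_fsc[of c "\<lambda>p. f (fst p) (snd p)" u] by (simp add: split_def)

lemma tmult_lin_lin:
  assumes "fsupp u" "fsupp v" "\<And>p. fsupp (f p)" "\<And>q. fsupp (g q)"
  shows "tmult (lin f u) (lin g v) = lin (\<lambda>(p, q). tmult (f p) (g q)) (tens u v)"
proof -
  have "tmult (lin f u) (lin g v) = lin (\<lambda>p. tmult (f p) (lin g v)) u"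
    by (rule tmult_lin1) (use assms in auto)
  also have "\<dots> = lin (\<lambda>p. lin (\<lambda>q. tmult (f p) (g q)) v) u"
    by (rule lin_cong, rule tmult_lin2) (use assms in auto)
  also have "\<dots> = lin (\<lambda>(p, q). tmult (f p) (g q)) (tens u v)"
    by (subst lin_tens) (use assms in auto)
  finally show ?thesis .
qed

lemma tens_lin1: "tens (lin f u) v = lin (\<lambda>p. tens (f p) v) u"
  by (rule ext) (auto simp: tens_def lin_apply sum_distrib_right sum_distrib_left mult_ac)

lemma tens_lin2: "tens u (lin g v) = lin (\<lambda>q. tens u (g q)) v"
  by (rule ext) (auto simp: tens_def lin_apply sum_distrib_left mult_ac)

lemma tens3_lin:
  fixes u v :: "hb \<Rightarrow> 'k::field"
  shows "lin (\<lambda>(k1, k2). tens (tens E (Y k1)) (e (x, k2))) (tens u v) = tens (tens E (lin Y u)) (tens (e x) v)"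
proof -
  have "lin (\<lambda>(k1, k2). tens (tens E (Y k1)) (e (x, k2))) (tens u v) = lin (\<lambda>k1. lin (\<lambda>k2. tens (tens E (Y k1)) (e (x, k2))) v) u"
    by (subst lin_tens) auto
  also have "\<dots> = lin (\<lambda>k2. lin (\<lambda>k1. tens (tens E (Y k1)) (e (x, k2))) u) v"
    by (rule lin_swap) auto
  also have "\<dots> = lin (\<lambda>k2. tens (tens E (lin Y u)) (e (x, k2))) v"
    by (simp add: tens_lin1 tens_lin2)
  also have "\<dots> = tens (tens E (lin Y u)) (lin (\<lambda>k2. e (x, k2)) v)"
    by (simp add: tens_lin2)
  also have "lin (\<lambda>k2. e (x, k2)) v = tens (e x) v"
  proof -
    have "tens (e x) v = tens (e x) (lin e v)" by (simp add: lin_id)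
    also have "\<dots> = lin (\<lambda>k. tens (e x) (e k)) v" by (rule tens_lin2)
    finally show ?thesis by simp
  qed
  finally show ?thesis .
qed

lemma fsupp_actT:
  assumes "\<And>h b. fsupp (yact X h b)"
  shows "fsupp (actT X h w)"
proof (induction w arbitrary: h)
  case Nil then show ?case by simp
next
  case (Cons b w)
  show ?case by (simp add: split_def Cons assms)
qed

lemma fsupp_coactT:
  assumes "\<And>b. fsupp (ycoact X b)"
  shows "fsupp (coactT X w)"
proof (induction w)
  case Nil then show ?case by simp
next
  case (Cons b w)
  show ?case by (simp add: split_def Cons assms)
qed

lemma fsupp_comultT:
  assumes "\<And>h b. fsupp (yact X h b)" "\<And>b. fsupp (ycoact X b)"
  shows "fsupp (comultT X w)"
proof (induction w)
  case Nil then show ?case by simp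
next
  case (Cons b w)
  show ?case by (simp add: split_def Cons assms fsupp_actT)
qed

locale tr =
  fixes V W :: "('k::field_char_0, 'b) ydm" and \<sigma> :: "'b \<Rightarrow> 'b" and c :: "'b \<Rightarrow> 'k"
  assumes bij_s: "bij \<sigma>"
    and c_nz: "\<And>b. c b \<noteq> 0"
    and bas: "\<sigma> ` ybas V = ybas W"
    and fV_act: "\<And>h b. fsupp (yact V h b)" and fV_co: "\<And>b. fsupp (ycoact V b)"
    and fW_act: "\<And>h b. fsupp (yact W h b)" and fW_co: "\<And>b. fsupp (ycoact W b)"
    and act: "\<And>h b. vsc (c b) (yact W h (\<sigma> b)) =
                lin (\<lambda>g. lin (\<lambda>d. vsc (c d) (e (\<sigma> d))) (yact V g b)) (tau3b h)"
    and coact: "\<And>b. vsc (c b) (ycoact W (\<sigma> b)) =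
                lin (\<lambda>(g, d). tens (tau3b g) (vsc (c d) (e (\<sigma> d)))) (ycoact V b)"
begin

definition cw :: "'b list \<Rightarrow> 'k" where "cw w = prod_list (map c w)"
definition phi :: "'b \<Rightarrow> 'b \<Rightarrow> 'k" where "phi b = vsc (c b) (e (\<sigma> b))"
definition Pw :: "'b list \<Rightarrow> 'b list \<Rightarrow> 'k" where "Pw w = vsc (cw w) (e (map \<sigma> w))"
definition Phi :: "('b list \<Rightarrow> 'k) \<Rightarrow> 'b list \<Rightarrow> 'k" where "Phi u = lin Pw u"

lemma fsupp_phi[simp]: "fsupp (phi b)" by (simp add: phi_def)
lemma fsupp_Pw[simp]: "fsupp (Pw w)" by (simp add: Pw_def)
lemma fsupp_Phi[simp]: "fsupp u \<Longrightarrow> fsupp (Phi u)" by (simp add: Phi_def)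

lemma fsV[simp]: "fsupp (yact V h b)" "fsupp (ycoact V b)" "fsupp (actT V h w)"
   "fsupp (coactT V w)" "fsupp (comultT V w)"
  by (simp_all add: fV_act fV_co fsupp_actT fsupp_coactT fsupp_comultT)
lemma fsW[simp]: "fsupp (yact W h b)" "fsupp (ycoact W b)" "fsupp (actT W h w)"
   "fsupp (coactT W w)" "fsupp (comultT W w)"
  by (simp_all add: fW_act fW_co fsupp_actT fsupp_coactT fsupp_comultT)

lemma cw_simps[simp]: "cw [] = 1" "cw (b # w) = c b * cw w" "cw (u @ v) = cw u * cw v"
  by (simp_all add: cw_def)

lemma Pw_Nil[simp]: "Pw [] = e []" by (simp add: Pw_def vsc_def)

lemma Pw_append: "Pw (u @ v) = tmult (Pw u) (Pw v)"
  by (simp add: Pw_def tmult_vsc1 tmult_vsc2 mult.commute)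

lemma Pw_Cons: "Pw (b # a) = tmult (vmap (\<lambda>x. [x]) (phi b)) (Pw a)"
  using Pw_append[of "[b]" a] by (simp add: Pw_def phi_def vmap_vsc)

lemma Phi_e[simp]: "Phi (e w) = Pw w" by (simp add: Phi_def)

lemma Phi_tmult:
  assumes "fsupp u" "fsupp v"
  shows "Phi (tmult u v) = tmult (Phi u) (Phi v)"
proof -
  have "Phi (tmult u v) = lin (\<lambda>p. Phi (lin (\<lambda>q. e (p @ q)) v)) u"
    unfolding Phi_def tmult_def bil_def by (rule lin_lin) (use assms in auto)
  also have "\<dots> = lin (\<lambda>p. lin (\<lambda>q. Pw (p @ q)) v) u"
    unfolding Phi_def by (rule lin_cong, subst lin_lin) (use assms in auto)
  also have "\<dots> = lin (\<lambda>p. tmult (Pw p) (Phi v)) u"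
    unfolding Phi_def Pw_append by (rule lin_cong, rule tmult_lin2[symmetric]) (use assms in auto)
  also have "\<dots> = tmult (Phi u) (Phi v)"
    unfolding Phi_def[of u] by (rule tmult_lin1[symmetric]) (use assms in auto)
  finally show ?thesis .
qed

lemma Phi_vmap_sing:
  assumes "fsupp X"
  shows "Phi (vmap (\<lambda>x. [x]) X) = vmap (\<lambda>x. [x]) (lin phi X)"
proof -
  have "Phi (vmap (\<lambda>x. [x]) X) = lin (\<lambda>p. Pw [p]) X"
    unfolding Phi_def by (rule lin_vmap[OF assms])
  also have "\<dots> = lin (\<lambda>p. vmap (\<lambda>x. [x]) (phi p)) X"
    by (simp add: Pw_def phi_def vmap_vsc)
  also have "\<dots> = vmap (\<lambda>x. [x]) (lin phi X)"
    by (rule vmap_lin[symmetric]) (use assms in auto)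
  finally show ?thesis .
qed

lemma act2: "lin phi (yact V h b) = lin (\<lambda>k. vsc (c b) (yact W k (\<sigma> b))) (tau3b h)"
proof -
  have "lin (\<lambda>k. vsc (c b) (yact W k (\<sigma> b))) (tau3b h)
      = lin (\<lambda>k. lin (\<lambda>g. lin phi (yact V g b)) (tau3b k)) (tau3b h)"
    by (simp add: act phi_def[abs_def])
  also have "\<dots> = lin (\<lambda>g. lin phi (yact V g b)) (lin tau3b (tau3b h))"
    by (rule lin_lin[symmetric]) auto
  also have "\<dots> = lin phi (yact V h b)" by (simp add: tau3_invol)
  finally show ?thesis by simp
qed

lemma Phi_actT: "Phi (actT V g a) = lin (\<lambda>k. vsc (cw a) (actT W k (map \<sigma> a))) (tau3b g)"
proof (induction a arbitrary: g)
  case Nil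
  have "Phi (actT V g []) = e []" by (simp add: h8counit_def vsc_def Phi_def[symmetric])
  moreover have "lin (\<lambda>k. vsc (cw []) (actT W k (map \<sigma> []))) (tau3b g) = e []"
    by (simp add: h8counit_def lin_const_fin tau3_counit)
  ultimately show ?case by simp
next
  case (Cons b a)
  define Y where "Y = (\<lambda>k. vsc (c b) (yact W k (\<sigma> b)))"
  define Z where "Z = (\<lambda>k. vsc (cw a) (actT W k (map \<sigma> a)))"
  define G where "G = (\<lambda>(k1, k2). tmult (vmap (\<lambda>x. [x]) (Y k1)) (Z k2))"
  have fY[simp]: "fsupp (Y k)" for k by (simp add: Y_def)
  have fZ[simp]: "fsupp (Z k)" for k by (simp add: Z_def)
  have "Phi (actT V g (b # a)) = Phi (lin (\<lambda>(h1, h2). tmult (vmap (\<lambda>x. [x]) (yact V h1 b)) (actT V h2 a)) (h8comult g))"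
    by simp
  also have "\<dots> = lin (\<lambda>(h1, h2). Phi (tmult (vmap (\<lambda>x. [x]) (yact V h1 b)) (actT V h2 a))) (h8comult g)"
    unfolding Phi_def by (rule lin_lin_pair) auto
  also have "\<dots> = lin (\<lambda>(h1, h2). tmult (vmap (\<lambda>x. [x]) (lin Y (tau3b h1))) (lin Z (tau3b h2))) (h8comult g)"
    by (simp add: Phi_tmult Phi_vmap_sing act2 Cons Y_def Z_def)
  also have "\<dots> = lin (\<lambda>(h1, h2). lin G (tens (tau3b h1) (tau3b h2))) (h8comult g)"
  proof -
    have "tmult (vmap (\<lambda>x. [x]) (lin Y (tau3b h1))) (lin Z (tau3b h2)) = lin G (tens (tau3b h1) (tau3b h2))" for h1 h2
    proof -
      have "vmap (\<lambda>x. [x]) (lin Y (tau3b h1)) = lin (\<lambda>k. vmap (\<lambda>x. [x]) (Y k)) (tau3b h1)"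
        by (rule vmap_lin) auto
      then show ?thesis unfolding G_def by (simp add: tmult_lin_lin)
    qed
    then show ?thesis by simp
  qed
  also have "\<dots> = lin G (lin (\<lambda>(h1, h2). tens (tau3b h1) (tau3b h2)) (h8comult g))"
    by (rule lin_lin_pair[symmetric]) auto
  also have "\<dots> = lin G (lin h8comult (tau3b g))" by (simp add: tau3_comult)
  also have "\<dots> = lin (\<lambda>k. lin G (h8comult k)) (tau3b g)" by (rule lin_lin) auto
  also have "\<dots> = lin (\<lambda>k. vsc (cw (b # a)) (actT W k (map \<sigma> (b # a)))) (tau3b g)"
  proof (rule lin_cong)
    fix k
    have "lin G (h8comult k) = lin (\<lambda>(k1, k2). vsc (c b * cw a) (tmult (vmap (\<lambda>x. [x]) (yact W k1 (\<sigma> b))) (actT W k2 (map \<sigma> a)))) (h8comult k)"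
      unfolding G_def Y_def Z_def by (simp add: vmap_vsc tmult_vsc1 tmult_vsc2 mult.commute)
    also have "\<dots> = vsc (cw (b # a)) (actT W k (map \<sigma> (b # a)))"
      by (simp add: lin_fsc_pair)
    finally show "lin G (h8comult k) = vsc (cw (b # a)) (actT W k (map \<sigma> (b # a)))" .
  qed
  finally show ?case .
qed

lemma phi_eq: "phi = (\<lambda>d. vsc (c d) (e (\<sigma> d)))" by (simp add: phi_def[abs_def])

lemma coact2: "vsc (c b) (ycoact W (\<sigma> b)) = lin (\<lambda>(g, d). tens (tau3b g) (phi d)) (ycoact V b)"
  by (simp add: coact phi_eq)

lemma L2_tens:
  assumes "fsupp X" "fsupp Y"
  shows "lin (\<lambda>(a, d). tens (Pw a) (Pw d)) (tens X Y) = tens (Phi X) (Phi Y)"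
proof -
  have "lin (\<lambda>(a, d). tens (Pw a) (Pw d)) (tens X Y) = lin (\<lambda>a. lin (\<lambda>d. tens (Pw a) (Pw d)) Y) X"
    by (subst lin_tens) (use assms in auto)
  also have "\<dots> = tens (Phi X) (Phi Y)"
    unfolding Phi_def by (subst tens_lin) (use assms in auto)
  finally show ?thesis .
qed

lemma Phi2_comultT:
  "lin (\<lambda>(a, d). tens (Pw a) (Pw d)) (comultT V w) = vsc (cw w) (comultT W (map \<sigma> w))"
proof (induction w)
  case Nil
  then show ?case by (simp add: Pw_def)
next
  case (Cons b w)
  define L2 where "L2 = lin (\<lambda>(a, d). tens (Pw a) (Pw d))"
  define Fb where "Fb = (\<lambda>(a :: 'b list, c' :: 'b list). (\<sigma> b # a, c'))"
  define A where "A = vmap (\<lambda>(a, c'). (b # a, c')) (comultT V w)"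
  define B where "B = lin (\<lambda>(a, c'). lin (\<lambda>(g, d). tens (actT V g a) (e (d # c'))) (ycoact V b)) (comultT V w)"
  define BW where "BW = lin (\<lambda>(a, c'). lin (\<lambda>(k, d). tens (actT W k a) (e (d # c'))) (ycoact W (\<sigma> b))) (comultT W (map \<sigma> w))"
  have IH: "L2 (comultT V w) = vsc (cw w) (comultT W (map \<sigma> w))" using Cons by (simp add: L2_def)
  have fA: "fsupp A" by (simp add: A_def)
  have fB: "fsupp B" by (simp add: B_def split_def)
  have cV: "comultT V (b # w) = vadd A B" by (simp add: A_def B_def)
  have cW: "comultT W (map \<sigma> (b # w)) = vadd (vmap Fb (comultT W (map \<sigma> w))) BW"
    by (simp add: Fb_def BW_def)
  have "L2 A = lin (\<lambda>(a, c'). tens (Pw (b # a)) (Pw c')) (comultT V w)"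
    unfolding L2_def A_def by (subst lin_vmap) (auto simp: split_def)
  also have "\<dots> = lin (\<lambda>(a, c'). vsc (c b) (vmap Fb (tens (Pw a) (Pw c')))) (comultT V w)"
    by (simp add: Pw_def tens_vsc1 tens_vsc2 vmap_vsc Fb_def mult_ac)
  also have "\<dots> = vsc (c b) (vmap Fb (L2 (comultT V w)))"
    unfolding lin_fsc_pair L2_def by (subst vmap_lin) (auto simp: split_def)
  also have "\<dots> = vsc (cw (b # w)) (vmap Fb (comultT W (map \<sigma> w)))"
    by (simp add: IH vmap_vsc)
  finally have LA: "L2 A = vsc (cw (b # w)) (vmap Fb (comultT W (map \<sigma> w)))" .
  have "L2 B = lin (\<lambda>(a, c'). L2 (lin (\<lambda>(g, d). tens (actT V g a) (e (d # c'))) (ycoact V b))) (comultT V w)"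
    unfolding B_def L2_def by (rule lin_lin_pair) (auto simp: split_def)
  also have "\<dots> = lin (\<lambda>(a, c'). lin (\<lambda>(g, d). vsc (cw a * c d * cw c')
        (lin (\<lambda>k. tens (actT W k (map \<sigma> a)) (e (\<sigma> d # map \<sigma> c'))) (tau3b g))) (ycoact V b)) (comultT V w)"
  proof (rule lin_cong, clarify)
    fix a c'
    have "L2 (lin (\<lambda>(g, d). tens (actT V g a) (e (d # c'))) (ycoact V b))
        = lin (\<lambda>(g, d). L2 (tens (actT V g a) (e (d # c')))) (ycoact V b)"
      unfolding L2_def by (rule lin_lin_pair) auto
    also have "\<dots> = lin (\<lambda>(g, d). vsc (cw a * c d * cw c')
        (lin (\<lambda>k. tens (actT W k (map \<sigma> a)) (e (\<sigma> d # map \<sigma> c'))) (tau3b g))) (ycoact V b)"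
    proof (rule lin_cong, clarify)
      fix g d
      have "L2 (tens (actT V g a) (e (d # c'))) = tens (Phi (actT V g a)) (Pw (d # c'))"
        unfolding L2_def by (subst L2_tens) auto
      also have "\<dots> = vsc (cw a * c d * cw c')
        (lin (\<lambda>k. tens (actT W k (map \<sigma> a)) (e (\<sigma> d # map \<sigma> c'))) (tau3b g))"
        unfolding Phi_actT by (simp add: Pw_def tens_lin1 tens_vsc1 tens_vsc2 lin_fsc mult_ac)
      finally show "L2 (tens (actT V g a) (e (d # c'))) = \<dots>" .
    qed
    finally show "L2 (lin (\<lambda>(g, d). tens (actT V g a) (e (d # c'))) (ycoact V b)) = \<dots>" .
  qed
  also have "\<dots> = vsc (cw (b # w)) BW"
  proof -
    define H where "H = (\<lambda>(a' :: 'b list, c'' :: 'b list). lin (\<lambda>(k, d'). tens (actT W k a') (e (d' # c''))) (lin (\<lambda>(g, d). tens (tau3b g) (phi d)) (ycoact V b)))"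
    have "vsc (cw (b # w)) BW = lin H (L2 (comultT V w))"
    proof -
      have "vsc (cw (b # w)) BW = lin (\<lambda>(a, c'). lin (\<lambda>(k, d). tens (actT W k a) (e (d # c'))) (vsc (c b) (ycoact W (\<sigma> b)))) (vsc (cw w) (comultT W (map \<sigma> w)))"
        by (simp add: BW_def lin_vsc lin_fsc_pair mult.commute)
      then show ?thesis by (simp add: IH coact2 H_def)
    qed
    also have "\<dots> = lin (\<lambda>(a, c'). lin H (tens (Pw a) (Pw c'))) (comultT V w)"
      unfolding L2_def by (rule lin_lin_pair) auto
    also have "\<dots> = lin (\<lambda>(a, c'). lin (\<lambda>(g, d). vsc (cw a * c d * cw c')
        (lin (\<lambda>k. tens (actT W k (map \<sigma> a)) (e (\<sigma> d # map \<sigma> c'))) (tau3b g))) (ycoact V b)) (comultT V w)"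
    proof (rule lin_cong, clarify)
      fix a c'
      have "lin H (tens (Pw a) (Pw c')) = vsc (cw a * cw c') (H (map \<sigma> a, map \<sigma> c'))"
        by (simp add: Pw_def tens_vsc1 tens_vsc2 lin_vsc mult.commute)
      also have "\<dots> = vsc (cw a * cw c') (lin (\<lambda>(g, d). lin (\<lambda>(k, d'). tens (actT W k (map \<sigma> a)) (e (d' # map \<sigma> c'))) (tens (tau3b g) (phi d))) (ycoact V b))"
        unfolding H_def by (subst lin_lin_pair) (auto simp: phi_def)
      also have "\<dots> = lin (\<lambda>(g, d). vsc (cw a * c d * cw c')
        (lin (\<lambda>k. tens (actT W k (map \<sigma> a)) (e (\<sigma> d # map \<sigma> c'))) (tau3b g))) (ycoact V b)"
        by (simp add: lin_fsc_pair[symmetric] lin_tens phi_def lin_vsc lin_fsc mult_ac)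
      finally show "lin H (tens (Pw a) (Pw c')) = \<dots>" .
    qed
    finally show ?thesis by simp
  qed
  finally have LB: "L2 B = vsc (cw (b # w)) BW" .
  have "L2 (comultT V (b # w)) = vadd (L2 A) (L2 B)"
    unfolding cV L2_def by (rule lin_vadd[OF fA fB])
  also have "\<dots> = vsc (cw (b # w)) (comultT W (map \<sigma> (b # w)))"
    unfolding LA LB cW by (simp add: vsc_def vadd_def fun_eq_iff distrib_left)
  finally show ?case by (simp add: L2_def)
qed

lemma K_tens:
  assumes "fsupp Y"
  shows "lin (\<lambda>(g, a). tens (tau3b g) (Pw a)) (tens X Y) = tens (lin tau3b X) (Phi Y)"
proof -
  have "lin (\<lambda>(g, a). tens (tau3b g) (Pw a)) (tens X Y) = lin (\<lambda>g. lin (\<lambda>a. tens (tau3b g) (Pw a)) Y) X"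
    by (subst lin_tens) (use assms in auto)
  also have "\<dots> = tens (lin tau3b X) (Phi Y)"
    unfolding Phi_def by (subst tens_lin) (use assms in auto)
  finally show ?thesis .
qed

lemma Phi_coactT:
  "lin (\<lambda>(g, a). tens (tau3b g) (Pw a)) (coactT V w) = vsc (cw w) (coactT W (map \<sigma> w))"
proof (induction w)
  case Nil
  show ?case by (simp add: Pw_def tau3_unit)
next
  case (Cons b w)
  define K where "K = (\<lambda>(g, a). tens (tau3b g) (Pw a))"
  have IH: "lin K (coactT V w) = vsc (cw w) (coactT W (map \<sigma> w))" using Cons by (simp add: K_def)
  define E where "E = (\<lambda>d w'. e (\<sigma> d # map \<sigma> w') :: 'b list \<Rightarrow> 'k)"
  have "lin K (coactT V (b # w)) = lin (\<lambda>(g, d). lin K (lin (\<lambda>(g', w'). tens (h8m g g') (e (d # w'))) (coactT V w))) (ycoact V b)"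
    by (simp, rule lin_lin_pair) (auto simp: split_def)
  also have "\<dots> = lin (\<lambda>(g, d). lin (\<lambda>(g', w'). vsc (c d * cw w') (tens (h8mult (tau3b g) (tau3b g')) (E d w'))) (coactT V w)) (ycoact V b)"
  proof (rule lin_cong, clarify)
    fix g d
    have "lin K (lin (\<lambda>(g', w'). tens (h8m g g') (e (d # w'))) (coactT V w))
       = lin (\<lambda>(g', w'). lin K (tens (h8m g g') (e (d # w')))) (coactT V w)"
      by (rule lin_lin_pair) auto
    also have "\<dots> = lin (\<lambda>(g', w'). vsc (c d * cw w') (tens (h8mult (tau3b g) (tau3b g')) (E d w'))) (coactT V w)"
    proof (rule lin_cong, clarify)
      fix g' w'
      have "lin K (tens (h8m g g') (e (d # w'))) = tens (lin tau3b (h8m g g')) (Phi (e (d # w')))"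
        unfolding K_def by (rule K_tens) simp
      then show "lin K (tens (h8m g g') (e (d # w'))) = vsc (c d * cw w') (tens (h8mult (tau3b g) (tau3b g')) (E d w'))"
        by (simp add: tau3_mult Pw_def E_def tens_vsc2)
    qed
    finally show "lin K (lin (\<lambda>(g', w'). tens (h8m g g') (e (d # w'))) (coactT V w)) = \<dots>" .
  qed
  also have "\<dots> = vsc (cw (b # w)) (coactT W (map \<sigma> (b # w)))"
  proof -
    define M where "M = (\<lambda>k d'. lin (\<lambda>(k', w''). tens (h8m k k') (e (d' # w''))) (lin K (coactT V w)))"
    have "vsc (cw (b # w)) (coactT W (map \<sigma> (b # w)))
       = lin (\<lambda>(k, d'). lin (\<lambda>(k', w''). tens (h8m k k') (e (d' # w''))) (vsc (cw w) (coactT W (map \<sigma> w)))) (vsc (c b) (ycoact W (\<sigma> b)))"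
      by (simp add: lin_vsc lin_fsc_pair mult.commute)
    also have "\<dots> = lin (\<lambda>(k, d'). M k d') (lin (\<lambda>(g, d). tens (tau3b g) (phi d)) (ycoact V b))"
      by (simp add: IH coact2 M_def)
    also have "\<dots> = lin (\<lambda>(g, d). lin (\<lambda>(k, d'). M k d') (tens (tau3b g) (phi d))) (ycoact V b)"
      by (rule lin_lin_pair) (auto simp: phi_def)
    also have "\<dots> = lin (\<lambda>(g, d). lin (\<lambda>(g', w'). vsc (c d * cw w') (tens (h8mult (tau3b g) (tau3b g')) (E d w'))) (coactT V w)) (ycoact V b)"
    proof (rule lin_cong, clarify)
      fix g d
      have "lin (\<lambda>(k, d'). M k d') (tens (tau3b g) (phi d)) = vsc (c d) (lin (\<lambda>k. M k (\<sigma> d)) (tau3b g))"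
        by (simp add: lin_tens phi_def lin_vsc lin_fsc)
      also have "\<dots> = vsc (c d) (lin (\<lambda>k. lin (\<lambda>(g', w'). vsc (cw w') (lin (\<lambda>k'. tens (h8m k k') (E d w')) (tau3b g'))) (coactT V w)) (tau3b g))"
      proof -
        have "M k (\<sigma> d) = lin (\<lambda>(g', w'). vsc (cw w') (lin (\<lambda>k'. tens (h8m k k') (E d w')) (tau3b g'))) (coactT V w)" for k
        proof -
          have "M k (\<sigma> d) = lin (\<lambda>(g', w'). lin (\<lambda>(k', w''). tens (h8m k k') (e (\<sigma> d # w''))) (K (g', w'))) (coactT V w)"
          proof -
            have "M k (\<sigma> d) = lin (\<lambda>p. lin (\<lambda>(k', w''). tens (h8m k k') (e (\<sigma> d # w''))) (K p)) (coactT V w)"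
              unfolding M_def by (rule lin_lin) (auto simp: K_def split: prod.splits)
            then show ?thesis by (simp add: split_def)
          qed
          also have "\<dots> = lin (\<lambda>(g', w'). vsc (cw w') (lin (\<lambda>k'. tens (h8m k k') (E d w')) (tau3b g'))) (coactT V w)"
            by (rule lin_cong, clarify) (simp add: K_def lin_tens Pw_def lin_vsc lin_fsc E_def)
          finally show ?thesis .
        qed
        then show ?thesis by simp
      qed
      also have "\<dots> = vsc (c d) (lin (\<lambda>(g', w'). lin (\<lambda>k. vsc (cw w') (lin (\<lambda>k'. tens (h8m k k') (E d w')) (tau3b g'))) (tau3b g)) (coactT V w))"
        using lin_swap[of "tau3b g" "coactT V w" "\<lambda>k p. (case p of (g', w') \<Rightarrow> vsc (cw w') (lin (\<lambda>k'. tens (h8m k k') (E d w')) (tau3b g')))"]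
        by (simp add: split_def)
      also have "\<dots> = lin (\<lambda>(g', w'). vsc (c d * cw w') (tens (h8mult (tau3b g) (tau3b g')) (E d w'))) (coactT V w)"
        by (simp add: lin_fsc_pair[symmetric] lin_fsc h8mult_def bil_def tens_lin1 mult_ac)
      finally show "lin (\<lambda>(k, d'). M k d') (tens (tau3b g) (phi d)) = \<dots>" .
    qed
    finally show ?thesis by simp
  qed
  finally show ?case by (simp add: K_def)
qed

definition Fm :: "'b list \<times> hb \<Rightarrow> 'b list \<times> hb \<Rightarrow> 'k" where
  "Fm p = (case p of (w, h) \<Rightarrow> ptens (Pw w) (tau3b h))"

lemma Fm_simp[simp]: "Fm (w, h) = tens (Pw w) (tau3b h)"
  by (simp add: Fm_def ptens_tens)

lemma fsupp_Fm[simp]: "fsupp (Fm p)" by (cases p) simp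

lemma Fm_tens:
  assumes "fsupp X"
  shows "lin Fm (tens X (Y :: hb \<Rightarrow> 'k)) = tens (Phi X) (lin tau3b Y)"
proof -
  have "lin Fm (tens X Y) = lin (\<lambda>a. lin (\<lambda>h. Fm (a, h)) Y) X"
    by (subst lin_tens) (use assms in auto)
  also have "\<dots> = tens (Phi X) (lin tau3b Y)"
    unfolding Phi_def by (subst tens_lin) (use assms in auto)
  finally show ?thesis .
qed

lemma bil_tens_e:
  "bil K (tens (e a) (u :: hb \<Rightarrow> 'k)) (tens (e b) (v :: hb \<Rightarrow> 'k)) = lin (\<lambda>k. lin (\<lambda>k'. K (a, k) (b, k')) v) u"
  unfolding bil_def by (simp add: lin_tens)

lemma bm_transport: "lin Fm (bm V (w, h) (w', h')) = bmult W (Fm (w, h)) (Fm (w', h'))"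
proof -
  define s where "s = cw w * cw w'"
  define T where "T = (\<lambda>k1. tmult (e (map \<sigma> w)) (actT W k1 (map \<sigma> w')))"
  have fT[simp]: "fsupp (T k)" for k by (simp add: T_def)
  have "lin Fm (bm V (w, h) (w', h')) = lin (\<lambda>(h1, h2). lin Fm (tens (tmult (e w) (actT V h1 w')) (h8m h2 h'))) (h8comult h)"
    unfolding bm_def ptens_tens by (simp, rule lin_lin_pair) auto
  also have "\<dots> = lin (\<lambda>(h1, h2). tens (tmult (Pw w) (lin (\<lambda>k. vsc (cw w') (actT W k (map \<sigma> w'))) (tau3b h1))) (h8mult (tau3b h2) (tau3b h'))) (h8comult h)"
    by (rule lin_cong, clarify) (simp add: Fm_tens Phi_tmult tau3_mult Phi_actT)
  also have "\<dots> = vsc s (lin (\<lambda>(h1, h2). tens (lin T (tau3b h1)) (h8mult (tau3b h2) (tau3b h'))) (h8comult h))"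
  proof -
    have "tmult (Pw w) (lin (\<lambda>k. vsc (cw w') (actT W k (map \<sigma> w'))) (tau3b h1)) = vsc s (lin T (tau3b h1))" for h1
      by (simp add: Pw_def tmult_vsc1 lin_fsc tmult_vsc2 s_def T_def tmult_lin2 mult.commute)
    then show ?thesis by (simp add: tens_vsc1 lin_fsc_pair)
  qed
  also have "\<dots> = vsc s (lin (\<lambda>(h1, h2). lin (\<lambda>(k1, k2). tens (T k1) (lin (h8m k2) (tau3b h'))) (tens (tau3b h1) (tau3b h2))) (h8comult h))"
  proof -
    have "tens (lin T (tau3b h1)) (h8mult (tau3b h2) (tau3b h')) = lin (\<lambda>(k1, k2). tens (T k1) (lin (h8m k2) (tau3b h'))) (tens (tau3b h1) (tau3b h2))" for h1 h2
      by (simp add: lin_tens tens_lin h8mult_def bil_def)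
    then show ?thesis by simp
  qed
  also have "\<dots> = vsc s (lin (\<lambda>(k1, k2). tens (T k1) (lin (h8m k2) (tau3b h'))) (lin (\<lambda>(h1, h2). tens (tau3b h1) (tau3b h2)) (h8comult h)))"
    by (subst lin_lin_pair) auto
  also have "\<dots> = vsc s (lin (\<lambda>k. lin (\<lambda>(k1, k2). tens (T k1) (lin (h8m k2) (tau3b h'))) (h8comult k)) (tau3b h))"
    by (simp add: tau3_comult lin_lin)
  also have "\<dots> = vsc s (lin (\<lambda>k. lin (\<lambda>k'. lin (\<lambda>(k1, k2). tens (T k1) (h8m k2 k')) (h8comult k)) (tau3b h')) (tau3b h))"
  proof -
    have "lin (\<lambda>(k1, k2). tens (T k1) (lin (h8m k2) (tau3b h'))) (h8comult k) = lin (\<lambda>k'. lin (\<lambda>(k1, k2). tens (T k1) (h8m k2 k')) (h8comult k)) (tau3b h')" for k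
    proof -
      have "lin (\<lambda>(k1, k2). tens (T k1) (lin (h8m k2) (tau3b h'))) (h8comult k) = lin (\<lambda>p. lin (\<lambda>k'. tens (T (fst p)) (h8m (snd p) k')) (tau3b h')) (h8comult k)"
        by (simp add: tens_lin2 split_def)
      also have "\<dots> = lin (\<lambda>k'. lin (\<lambda>p. tens (T (fst p)) (h8m (snd p) k')) (h8comult k)) (tau3b h')"
        by (rule lin_swap) auto
      finally show ?thesis by (simp add: split_def)
    qed
    then show ?thesis by simp
  qed
  also have "\<dots> = bmult W (Fm (w, h)) (Fm (w', h'))"
    by (simp add: bmult_def Pw_def tens_vsc1 bil_def lin_vsc lin_fsc s_def mult.commute)
       (simp add: bil_def[symmetric] bil_tens_e bm_def ptens_tens T_def)
  finally show ?thesis .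
qed

lemma h8mult_swap: "h8mult u v = lin (\<lambda>k1. lin (\<lambda>g. h8m g k1) u) (v :: hb \<Rightarrow> 'k)"
  unfolding h8mult_def bil_def by (rule lin_swap) auto

lemma tens_e_lin: "tens (e x) (v :: hb \<Rightarrow> 'k) = lin (\<lambda>k. e (x, k)) v"
proof -
  have "tens (e x) v = tens (e x) (lin e v)" by (simp add: lin_id)
  also have "\<dots> = lin (\<lambda>k. tens (e x) (e k)) v" by (rule tens_lin2)
  finally show ?thesis by simp
qed

lemma bc_transport: "lin (bc W) (Fm (w, h)) = lin (\<lambda>(p1, p2). tens (Fm p1) (Fm p2)) (bc V (w, h))"
proof -
  define R where "R = (\<lambda>(a1 :: 'b list) (k :: hb) (g :: hb) (a2' :: 'b list). lin (\<lambda>(k1, k2). tens (tens (e a1 :: 'b list \<Rightarrow> 'k) (h8m g k1)) (e (a2', k2))) (h8comult k))"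
  define Q where "Q = (\<lambda>(k :: hb) (a1 :: 'b list) (a2 :: 'b list). lin (\<lambda>(g, a2'). R a1 k g a2') (coactT W a2))"
  have fR[simp]: "fsupp (R a1 k g a2')" for a1 k g a2' by (simp add: R_def split_def)
  have fQ[simp]: "fsupp (Q k a1 a2)" for k a1 a2 by (simp add: Q_def split_def)
  have bcW: "bc W (a, k) = lin (\<lambda>(a1, a2). Q k a1 a2) (comultT W a)" for a k
    by (simp add: bc_def Q_def R_def ptens_tens)
  have "lin (bc W) (Fm (w, h)) = vsc (cw w) (lin (\<lambda>k. bc W (map \<sigma> w, k)) (tau3b h))"
    by (simp add: Pw_def tens_vsc1 lin_vsc lin_tens)
  also have "\<dots> = lin (\<lambda>k. lin (\<lambda>(a1, a2). Q k a1 a2) (lin (\<lambda>(a, d). tens (Pw a) (Pw d)) (comultT V w))) (tau3b h)"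
    by (simp add: bcW Phi2_comultT lin_vsc lin_fsc)
  also have "\<dots> = lin (\<lambda>k. lin (\<lambda>(a1, a2). vsc (cw a1 * cw a2) (Q k (map \<sigma> a1) (map \<sigma> a2))) (comultT V w)) (tau3b h)"
  proof (rule lin_cong)
    fix k
    have "lin (\<lambda>(a1, a2). Q k a1 a2) (lin (\<lambda>(a, d). tens (Pw a) (Pw d)) (comultT V w))
       = lin (\<lambda>(a, d). lin (\<lambda>(a1, a2). Q k a1 a2) (tens (Pw a) (Pw d))) (comultT V w)"
      by (rule lin_lin_pair) auto
    also have "\<dots> = lin (\<lambda>(a1, a2). vsc (cw a1 * cw a2) (Q k (map \<sigma> a1) (map \<sigma> a2))) (comultT V w)"
      by (rule lin_cong, clarify) (simp add: Pw_def tens_vsc1 tens_vsc2 lin_vsc mult.commute)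
    finally show "lin (\<lambda>(a1, a2). Q k a1 a2) (lin (\<lambda>(a, d). tens (Pw a) (Pw d)) (comultT V w)) = \<dots>" .
  qed
  also have "\<dots> = lin (\<lambda>(a1, a2). lin (\<lambda>k. vsc (cw a1 * cw a2) (Q k (map \<sigma> a1) (map \<sigma> a2))) (tau3b h)) (comultT V w)"
    using lin_swap[of "tau3b h" "comultT V w" "\<lambda>k p. vsc (cw (fst p) * cw (snd p)) (Q k (map \<sigma> (fst p)) (map \<sigma> (snd p)))"]
    by (simp add: split_def)
  also have "\<dots> = lin (\<lambda>(a1, a2). lin (\<lambda>(g, a2'). lin (\<lambda>(h1, h2). tens (tens (Pw a1) (h8mult (tau3b g) (tau3b h1))) (tens (Pw a2') (tau3b h2))) (h8comult h)) (coactT V a2)) (comultT V w)"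
  proof (rule lin_cong, clarify)
    fix a1 a2
    have "vsc (cw a2) (Q k (map \<sigma> a1) (map \<sigma> a2)) = lin (\<lambda>(g0, a). vsc (cw a) (lin (\<lambda>g. R (map \<sigma> a1) k g (map \<sigma> a)) (tau3b g0))) (coactT V a2)" for k
    proof -
      have "vsc (cw a2) (Q k (map \<sigma> a1) (map \<sigma> a2)) = lin (\<lambda>(g, a2'). R (map \<sigma> a1) k g a2') (lin (\<lambda>(g, a). tens (tau3b g) (Pw a)) (coactT V a2))"
        by (simp add: Q_def lin_vsc Phi_coactT)
      also have "\<dots> = lin (\<lambda>(g0, a). lin (\<lambda>(g, a2'). R (map \<sigma> a1) k g a2') (tens (tau3b g0) (Pw a))) (coactT V a2)"
        by (rule lin_lin_pair) auto
      also have "\<dots> = lin (\<lambda>(g0, a). vsc (cw a) (lin (\<lambda>g. R (map \<sigma> a1) k g (map \<sigma> a)) (tau3b g0))) (coactT V a2)"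
        by (rule lin_cong, clarify) (simp add: lin_tens Pw_def lin_vsc lin_fsc)
      finally show ?thesis .
    qed
    note F = this
    have "lin (\<lambda>k. vsc (cw a1 * cw a2) (Q k (map \<sigma> a1) (map \<sigma> a2))) (tau3b h)
       = lin (\<lambda>k. vsc (cw a1) (lin (\<lambda>(g0, a). vsc (cw a) (lin (\<lambda>g. R (map \<sigma> a1) k g (map \<sigma> a)) (tau3b g0))) (coactT V a2))) (tau3b h)"
    proof (rule lin_cong)
      fix k
      show "vsc (cw a1 * cw a2) (Q k (map \<sigma> a1) (map \<sigma> a2)) = vsc (cw a1) (lin (\<lambda>(g0, a). vsc (cw a) (lin (\<lambda>g. R (map \<sigma> a1) k g (map \<sigma> a)) (tau3b g0))) (coactT V a2))"
        by (simp add: F[symmetric])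
    qed
    also have "\<dots> = lin (\<lambda>k. lin (\<lambda>p. vsc (cw a1 * cw (snd p)) (lin (\<lambda>g. R (map \<sigma> a1) k g (map \<sigma> (snd p))) (tau3b (fst p)))) (coactT V a2)) (tau3b h)"
      by (rule lin_cong) (simp add: lin_fsc[symmetric] split_def)
    also have "\<dots> = lin (\<lambda>p. lin (\<lambda>k. vsc (cw a1 * cw (snd p)) (lin (\<lambda>g. R (map \<sigma> a1) k g (map \<sigma> (snd p))) (tau3b (fst p)))) (tau3b h)) (coactT V a2)"
      by (rule lin_swap) auto
    also have "\<dots> = lin (\<lambda>(g0, a). lin (\<lambda>k. vsc (cw a1 * cw a) (lin (\<lambda>g. R (map \<sigma> a1) k g (map \<sigma> a)) (tau3b g0))) (tau3b h)) (coactT V a2)"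
      by (simp add: split_def)
    also have "\<dots> = lin (\<lambda>(g, a2'). lin (\<lambda>(h1, h2). tens (tens (Pw a1) (h8mult (tau3b g) (tau3b h1))) (tens (Pw a2') (tau3b h2))) (h8comult h)) (coactT V a2)"
    proof (rule lin_cong, clarify)
      fix g0 a
      define S where "S = (\<lambda>(k1 :: hb, k2 :: hb). tens (tens (e (map \<sigma> a1) :: 'b list \<Rightarrow> 'k) (lin (\<lambda>g. h8m g k1) (tau3b g0))) (e (map \<sigma> a, k2)))"
      have "lin (\<lambda>k. lin (\<lambda>g. R (map \<sigma> a1) k g (map \<sigma> a)) (tau3b g0)) (tau3b h) = lin (\<lambda>k. lin S (h8comult k)) (tau3b h)"
      proof (rule lin_cong)
        fix k
        have "lin (\<lambda>g. R (map \<sigma> a1) k g (map \<sigma> a)) (tau3b g0)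
           = lin (\<lambda>p. lin (\<lambda>g. tens (tens (e (map \<sigma> a1)) (h8m g (fst p))) (e (map \<sigma> a, snd p))) (tau3b g0)) (h8comult k)"
          unfolding R_def split_def by (rule lin_swap) auto
        also have "\<dots> = lin S (h8comult k)"
          unfolding S_def split_def by (simp add: tens_lin1 tens_lin2)
        finally show "lin (\<lambda>g. R (map \<sigma> a1) k g (map \<sigma> a)) (tau3b g0) = lin S (h8comult k)" .
      qed
      also have "\<dots> = lin S (lin (\<lambda>(h1, h2). tens (tau3b h1) (tau3b h2)) (h8comult h))"
        by (simp add: tau3_comult lin_lin)
      also have "\<dots> = lin (\<lambda>(h1, h2). lin S (tens (tau3b h1) (tau3b h2))) (h8comult h)"
        by (rule lin_lin_pair) auto
      also have "\<dots> = lin (\<lambda>(h1, h2). tens (tens (e (map \<sigma> a1)) (h8mult (tau3b g0) (tau3b h1))) (tens (e (map \<sigma> a)) (tau3b h2))) (h8comult h)"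
        by (rule lin_cong, clarify) (simp add: S_def tens3_lin h8mult_swap)
      finally have X: "lin (\<lambda>k. lin (\<lambda>g. R (map \<sigma> a1) k g (map \<sigma> a)) (tau3b g0)) (tau3b h) = \<dots>" .
      show "lin (\<lambda>k. vsc (cw a1 * cw a) (lin (\<lambda>g. R (map \<sigma> a1) k g (map \<sigma> a)) (tau3b g0))) (tau3b h)
         = lin (\<lambda>(h1, h2). tens (tens (Pw a1) (h8mult (tau3b g0) (tau3b h1))) (tens (Pw a) (tau3b h2))) (h8comult h)"
        by (simp add: lin_fsc X Pw_def tens_vsc1 tens_vsc2 lin_fsc_pair mult.commute)
    qed
    finally show "lin (\<lambda>k. vsc (cw a1 * cw a2) (Q k (map \<sigma> a1) (map \<sigma> a2))) (tau3b h) = \<dots>" .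
  qed
  also have "\<dots> = lin (\<lambda>(p1, p2). tens (Fm p1) (Fm p2)) (bc V (w, h))"
  proof -
    have "lin (\<lambda>(p1, p2). tens (Fm p1) (Fm p2)) (tens (tens (e a1) X) (e (a2', h2))) = tens (tens (Pw a1) (lin tau3b X)) (tens (Pw a2') (tau3b h2))" for a1 X a2' h2
    proof -
      have "lin (\<lambda>(p1, p2). tens (Fm p1) (Fm p2)) (tens (tens (e a1) X) (e (a2', h2))) = lin (\<lambda>q. tens (tens (Pw a1) (tau3b q)) (tens (Pw a2') (tau3b h2))) X"
        by (simp add: lin_tens)
      also have "\<dots> = tens (tens (Pw a1) (lin tau3b X)) (tens (Pw a2') (tau3b h2))"
        by (simp add: tens_lin1 tens_lin2)
      finally show ?thesis .
    qed
    note T = this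
    define F2 where "F2 = (\<lambda>(p1, p2). tens (Fm p1) (Fm p2))"
    have bcV: "bc V (w, h) = lin (\<lambda>(a1, a2). lin (\<lambda>(g, a2'). lin (\<lambda>(h1, h2). tens (tens (e a1) (h8m g h1)) (e (a2', h2))) (h8comult h)) (coactT V a2)) (comultT V w)"
      by (simp add: bc_def ptens_tens)
    have "lin F2 (bc V (w, h)) = lin (\<lambda>(a1, a2). lin F2 (lin (\<lambda>(g, a2'). lin (\<lambda>(h1, h2). tens (tens (e a1) (h8m g h1)) (e (a2', h2))) (h8comult h)) (coactT V a2))) (comultT V w)"
      unfolding bcV by (rule lin_lin_pair) (auto simp: split_def)
    also have "\<dots> = lin (\<lambda>(a1, a2). lin (\<lambda>(g, a2'). lin (\<lambda>(h1, h2). tens (tens (Pw a1) (h8mult (tau3b g) (tau3b h1))) (tens (Pw a2') (tau3b h2))) (h8comult h)) (coactT V a2)) (comultT V w)"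
    proof (rule lin_cong, clarify)
      fix a1 a2
      have "lin F2 (lin (\<lambda>(g, a2'). lin (\<lambda>(h1, h2). tens (tens (e a1) (h8m g h1)) (e (a2', h2))) (h8comult h)) (coactT V a2))
        = lin (\<lambda>(g, a2'). lin F2 (lin (\<lambda>(h1, h2). tens (tens (e a1) (h8m g h1)) (e (a2', h2))) (h8comult h))) (coactT V a2)"
        by (rule lin_lin_pair) (auto simp: split_def)
      also have "\<dots> = lin (\<lambda>(g, a2'). lin (\<lambda>(h1, h2). tens (tens (Pw a1) (h8mult (tau3b g) (tau3b h1))) (tens (Pw a2') (tau3b h2))) (h8comult h)) (coactT V a2)"
      proof (rule lin_cong, clarify)
        fix g a2'
        have "lin F2 (lin (\<lambda>(h1, h2). tens (tens (e a1) (h8m g h1)) (e (a2', h2))) (h8comult h))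
          = lin (\<lambda>(h1, h2). lin F2 (tens (tens (e a1) (h8m g h1)) (e (a2', h2)))) (h8comult h)"
          by (rule lin_lin_pair) auto
        also have "\<dots> = lin (\<lambda>(h1, h2). tens (tens (Pw a1) (h8mult (tau3b g) (tau3b h1))) (tens (Pw a2') (tau3b h2))) (h8comult h)"
          by (rule lin_cong, clarify) (simp add: F2_def T tau3_mult)
        finally show "lin F2 (lin (\<lambda>(h1, h2). tens (tens (e a1) (h8m g h1)) (e (a2', h2))) (h8comult h)) = \<dots>" .
      qed
      finally show "lin F2 (lin (\<lambda>(g, a2'). lin (\<lambda>(h1, h2). tens (tens (e a1) (h8m g h1)) (e (a2', h2))) (h8comult h)) (coactT V a2)) = \<dots>" .
    qed
    finally show ?thesis by (simp add: F2_def)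
  qed
  finally show ?thesis .
qed

end


lemma vzero_fun: "vzero = (\<lambda>p. 0)" by (simp add: vzero_def)

lemma lspan_zero: "(\<lambda>p. 0) \<in> lspan S"
  unfolding lspan_def by (rule CollectI, rule exI[of _ "{}"]) auto

lemma lspan_add:
  assumes "u \<in> lspan S" "v \<in> lspan S"
  shows "vadd u v \<in> lspan S"
proof -
  obtain F1 c1 where F1: "finite F1" "F1 \<subseteq> S" "u = (\<lambda>p. \<Sum>s\<in>F1. c1 s * s p)"
    using assms(1) unfolding lspan_def by blast
  obtain F2 c2 where F2: "finite F2" "F2 \<subseteq> S" "v = (\<lambda>p. \<Sum>s\<in>F2. c2 s * s p)"
    using assms(2) unfolding lspan_def by blast
  define c where "c s = (if s \<in> F1 then c1 s else 0) + (if s \<in> F2 then c2 s else 0)" for s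
  have "vadd u v = (\<lambda>p. \<Sum>s\<in>F1 \<union> F2. c s * s p)"
  proof
    fix p
    have "c s * s p = (if s \<in> F1 then c1 s * s p else 0) + (if s \<in> F2 then c2 s * s p else 0)" for s
      by (simp add: c_def distrib_right)
    then have "(\<Sum>s\<in>F1 \<union> F2. c s * s p) = (\<Sum>s\<in>F1 \<union> F2. (if s \<in> F1 then c1 s * s p else 0)) + (\<Sum>s\<in>F1 \<union> F2. (if s \<in> F2 then c2 s * s p else 0))"
      by (simp add: sum.distrib)
    also have "\<dots> = (\<Sum>s\<in>F1. c1 s * s p) + (\<Sum>s\<in>F2. c2 s * s p)"
    proof -
      have "(\<Sum>s\<in>F1 \<union> F2. (if s \<in> F1 then c1 s * s p else 0)) = (\<Sum>s\<in>F1. c1 s * s p)"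
        by (rule sum.mono_neutral_cong_right) (use F1 F2 in auto)
      moreover have "(\<Sum>s\<in>F1 \<union> F2. (if s \<in> F2 then c2 s * s p else 0)) = (\<Sum>s\<in>F2. c2 s * s p)"
        by (rule sum.mono_neutral_cong_right) (use F1 F2 in auto)
      ultimately show ?thesis by simp
    qed
    finally show "vadd u v p = (\<Sum>s\<in>F1 \<union> F2. c s * s p)" using F1(3) F2(3) by (simp add: vadd_def)
  qed
  then show ?thesis unfolding lspan_def using F1 F2 by blast
qed

lemma lspan_mono: "S \<subseteq> T \<Longrightarrow> lspan S \<subseteq> lspan T"
  unfolding lspan_def by blast

lemma lin_sum_comb:
  assumes "finite F" "\<And>s. s \<in> F \<Longrightarrow> fsupp s"
  shows "lin f (\<lambda>p. \<Sum>s\<in>F. c s * s p) = (\<lambda>q. \<Sum>s\<in>F. c s * lin f s q)"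
  using assms
proof (induction F rule: finite_induct)
  case empty
  then show ?case by simp
next
  case (insert x F)
  have fF: "fsupp (\<lambda>p. \<Sum>s\<in>F. c s * s p)"
  proof -
    have "{p. (\<Sum>s\<in>F. c s * s p) \<noteq> 0} \<subseteq> (\<Union>s\<in>F. {p. s p \<noteq> 0})"
    proof
      fix p assume "p \<in> {p. (\<Sum>s\<in>F. c s * s p) \<noteq> 0}"
      then have "(\<Sum>s\<in>F. c s * s p) \<noteq> 0" by simp
      then obtain s where "s \<in> F" "c s * s p \<noteq> 0" by (meson sum.neutral)
      then show "p \<in> (\<Union>s\<in>F. {p. s p \<noteq> 0})" by auto
    qed
    moreover have "finite (\<Union>s\<in>F. {p. s p \<noteq> 0})" using insert by (auto simp: fsupp_def)
    ultimately show ?thesis unfolding fsupp_def by (rule finite_subset)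
  qed
  have "(\<lambda>p. \<Sum>s\<in>insert x F. c s * s p) = vadd (vsc (c x) x) (\<lambda>p. \<Sum>s\<in>F. c s * s p)"
    using insert by (simp add: vadd_def vsc_def)
  then have "lin f (\<lambda>p. \<Sum>s\<in>insert x F. c s * s p) = vadd (vsc (c x) (lin f x)) (lin f (\<lambda>p. \<Sum>s\<in>F. c s * s p))"
    using insert fF by (simp add: lin_vadd lin_vsc)
  then show ?case using insert by (simp add: vadd_def vsc_def)
qed

lemma lspan_image:
  assumes "\<And>s. s \<in> S \<Longrightarrow> fsupp s" "\<And>s. s \<in> S \<Longrightarrow> lin f s \<in> S'" "v \<in> lspan S"
  shows "lin f v \<in> lspan S'"
proof -
  obtain F c where F: "finite F" "F \<subseteq> S" "v = (\<lambda>p. \<Sum>s\<in>F. c s * s p)"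
    using assms(3) unfolding lspan_def by blast
  have "lin f v = (\<lambda>q. \<Sum>s\<in>F. c s * lin f s q)"
    unfolding F(3) by (rule lin_sum_comb) (use F assms(1) in auto)
  also have "\<dots> = (\<lambda>q. \<Sum>s'\<in>(lin f) ` F. (\<Sum>s\<in>{s\<in>F. lin f s = s'}. c s) * s' q)"
  proof
    fix q
    have "(\<Sum>s\<in>F. c s * lin f s q) = (\<Sum>s'\<in>(lin f) ` F. \<Sum>s\<in>{s\<in>F. lin f s = s'}. c s * lin f s q)"
      by (rule sum.image_gen[OF F(1)])
    also have "\<dots> = (\<Sum>s'\<in>(lin f) ` F. (\<Sum>s\<in>{s\<in>F. lin f s = s'}. c s) * s' q)"
      by (rule sum.cong) (auto simp: sum_distrib_right)
    finally show "(\<Sum>s\<in>F. c s * lin f s q) = \<dots>" .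
  qed
  finally have eq: "lin f v = (\<lambda>q. \<Sum>s'\<in>(lin f) ` F. (\<Sum>s\<in>{s\<in>F. lin f s = s'}. c s) * s' q)" .
  have "finite ((lin f) ` F)" "(lin f) ` F \<subseteq> S'" using F assms(2) by auto
  then show ?thesis unfolding lspan_def
    by (intro CollectI exI[of _ "(lin f) ` F"] exI[of _ "\<lambda>s'. \<Sum>s\<in>{s\<in>F. lin f s = s'}. c s"] conjI eq)
qed

lemma TV_fsupp: "u \<in> TV X \<Longrightarrow> fsupp u" by (simp add: TV_def)

lemma adm_zero: "nichols_admissible X {vzero}"
proof -
  have "lin (comultT X) vzero \<in> coideal_target {vzero} (TV X)"
    using lspan_zero by (simp add: coideal_target_def vzero_fun)
  moreover have "tmult (tmult a vzero) b = vzero" for a b :: "_ list \<Rightarrow> 'a"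
    by (simp add: tmult_def bil_def vzero_fun)
  moreover have "(\<lambda>w. if length w = n then vzero w else 0) = vzero" for n :: nat
    by (simp add: vzero_def fun_eq_iff)
  moreover have "vzero \<in> TV X" by (simp add: TV_def vzero_fun)
  moreover have "vadd vzero vzero = vzero" "vsc a vzero = vzero" for a
    by (simp_all add: vzero_fun vadd_def vsc_def)
  ultimately show ?thesis
    unfolding nichols_admissible_def by (auto simp: vzero_fun)
qed

lemma ct_mono0: "J \<subseteq> J' \<Longrightarrow> coideal_target J T \<subseteq> coideal_target J' T"
  unfolding coideal_target_def by (rule lspan_mono) blast

lemma adm_sum:
  assumes J1: "nichols_admissible X J1" and J2: "nichols_admissible X J2"
  shows "nichols_admissible X {vadd u v | u v. u \<in> J1 \<and> v \<in> J2}" (is "nichols_admissible X ?J")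
proof -
  have sub1: "J1 \<subseteq> ?J"
  proof
    fix u assume "u \<in> J1"
    moreover have "vzero \<in> J2" using J2 by (simp add: nichols_admissible_def)
    moreover have "vadd u vzero = u" by (simp add: vadd_def vzero_def)
    ultimately show "u \<in> ?J" by force
  qed
  have sub2: "J2 \<subseteq> ?J"
  proof
    fix u assume "u \<in> J2"
    moreover have "vzero \<in> J1" using J1 by (simp add: nichols_admissible_def)
    moreover have "vadd vzero u = u" by (simp add: vadd_def vzero_def)
    ultimately show "u \<in> ?J" by force
  qed
  have T1: "J1 \<subseteq> TV X" and T2: "J2 \<subseteq> TV X" using J1 J2 by (auto simp: nichols_admissible_def)
  have TVadd: "vadd u v \<in> TV X" if "u \<in> TV X" "v \<in> TV X" for u v
  proof -
    have "fsupp (vadd u v)" using that by (simp add: TV_def)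
    moreover have "set w \<subseteq> ybas X" if "vadd u v w \<noteq> 0" for w
    proof -
      have "u w \<noteq> 0 \<or> v w \<noteq> 0" using that by (auto simp: vadd_def)
      then show ?thesis using \<open>u \<in> TV X\<close> \<open>v \<in> TV X\<close> by (auto simp: TV_def)
    qed
    ultimately show ?thesis by (simp add: TV_def)
  qed
  have ct_mono: "coideal_target J1 (TV X) \<subseteq> coideal_target ?J (TV X)"
    "coideal_target J2 (TV X) \<subseteq> coideal_target ?J (TV X)"
    using sub1 sub2 by (auto intro!: ct_mono0)
  show ?thesis
    unfolding nichols_admissible_def
  proof (intro conjI ballI allI impI)
    show "?J \<subseteq> TV X" using T1 T2 TVadd by blast
    show "vzero \<in> ?J" using sub1 J1 by (auto simp: nichols_admissible_def)
  next
    fix x y assume "x \<in> ?J" "y \<in> ?J"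
    then obtain u1 v1 u2 v2 where "x = vadd u1 v1" "y = vadd u2 v2" "u1 \<in> J1" "u2 \<in> J1" "v1 \<in> J2" "v2 \<in> J2" by blast
    moreover have "vadd (vadd u1 v1) (vadd u2 v2) = vadd (vadd u1 u2) (vadd v1 v2)"
      by (simp add: vadd_def fun_eq_iff add_ac)
    moreover have "vadd u1 u2 \<in> J1" using J1 \<open>u1 \<in> J1\<close> \<open>u2 \<in> J1\<close> by (simp add: nichols_admissible_def)
    moreover have "vadd v1 v2 \<in> J2" using J2 \<open>v1 \<in> J2\<close> \<open>v2 \<in> J2\<close> by (simp add: nichols_admissible_def)
    ultimately show "vadd x y \<in> ?J" by blast
  next
    fix a x assume "x \<in> ?J"
    then obtain u v where "x = vadd u v" "u \<in> J1" "v \<in> J2" by blast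
    moreover have "vsc a (vadd u v) = vadd (vsc a u) (vsc a v)" by (simp add: vsc_def vadd_def fun_eq_iff distrib_left)
    moreover have "vsc a u \<in> J1" "vsc a v \<in> J2" using J1 J2 \<open>u \<in> J1\<close> \<open>v \<in> J2\<close> by (simp_all add: nichols_admissible_def)
    ultimately show "vsc a x \<in> ?J" by blast
  next
    fix x n assume "x \<in> ?J"
    then obtain u v where "x = vadd u v" "u \<in> J1" "v \<in> J2" by blast
    moreover have "(\<lambda>w. if length w = n then vadd u v w else 0) = vadd (\<lambda>w. if length w = n then u w else 0) (\<lambda>w. if length w = n then v w else 0)"
      by (simp add: vadd_def fun_eq_iff)
    moreover have "(\<lambda>w. if length w = n then u w else 0) \<in> J1" "(\<lambda>w. if length w = n then v w else 0) \<in> J2"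
      using J1 J2 \<open>u \<in> J1\<close> \<open>v \<in> J2\<close> by (simp_all add: nichols_admissible_def)
    ultimately show "(\<lambda>w. if length w = n then x w else 0) \<in> ?J" by blast
  next
    fix x and w :: "'b list" assume "x \<in> ?J" "length w < 2"
    then obtain u v where "x = vadd u v" "u \<in> J1" "v \<in> J2" by blast
    moreover have "u w = 0" "v w = 0" using J1 J2 \<open>u \<in> J1\<close> \<open>v \<in> J2\<close> \<open>length w < 2\<close>
      by (simp_all add: nichols_admissible_def)
    ultimately show "x w = 0" by (simp add: vadd_def)
  next
    fix x a b assume "x \<in> ?J" "a \<in> TV X" "b \<in> TV X"
    then obtain u v where uv: "x = vadd u v" "u \<in> J1" "v \<in> J2" by blast
    have fu: "fsupp u" "fsupp v" "fsupp a" "fsupp b" using uv T1 T2 \<open>a \<in> TV X\<close> \<open>b \<in> TV X\<close> by (auto simp: TV_def)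
    have "tmult (tmult a (vadd u v)) b = vadd (tmult (tmult a u) b) (tmult (tmult a v) b)"
      using fu by (simp add: tmult_vadd1 tmult_vadd2)
    moreover have "tmult (tmult a u) b \<in> J1" "tmult (tmult a v) b \<in> J2"
      using J1 J2 uv \<open>a \<in> TV X\<close> \<open>b \<in> TV X\<close> by (simp_all add: nichols_admissible_def)
    ultimately show "tmult (tmult a x) b \<in> ?J" using uv(1) by blast
  next
    fix x assume "x \<in> ?J"
    then obtain u v where uv: "x = vadd u v" "u \<in> J1" "v \<in> J2" by blast
    have fu: "fsupp u" "fsupp v" using uv T1 T2 by (auto simp: TV_def)
    have "lin (comultT X) u \<in> coideal_target ?J (TV X)" using uv J1 ct_mono unfolding nichols_admissible_def by blast
    moreover have "lin (comultT X) v \<in> coideal_target ?J (TV X)" using uv J2 ct_mono unfolding nichols_admissible_def by blast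
    ultimately show "lin (comultT X) x \<in> coideal_target ?J (TV X)"
      unfolding uv(1) lin_vadd[OF fu] coideal_target_def by (rule lspan_add)
  qed
qed

lemma N_zero: "(\<lambda>w. 0) \<in> nichols_ideal X"
  using adm_zero[of X] unfolding nichols_ideal_def vzero_fun by blast

lemma N_vsc: "u \<in> nichols_ideal X \<Longrightarrow> vsc a u \<in> nichols_ideal X"
  unfolding nichols_ideal_def nichols_admissible_def by blast

lemma N_add: "u \<in> nichols_ideal X \<Longrightarrow> v \<in> nichols_ideal X \<Longrightarrow> vadd u v \<in> nichols_ideal X"
proof -
  assume "u \<in> nichols_ideal X" "v \<in> nichols_ideal X"
  then obtain J1 J2 where "nichols_admissible X J1" "u \<in> J1" "nichols_admissible X J2" "v \<in> J2"
    unfolding nichols_ideal_def by blast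
  then show ?thesis unfolding nichols_ideal_def using adm_sum by blast
qed

lemma N_comb:
  assumes "finite H" "\<And>h. h \<in> H \<Longrightarrow> f h \<in> nichols_ideal X"
  shows "(\<lambda>w. \<Sum>h\<in>H. a h * f h w) \<in> nichols_ideal X"
  using assms
proof (induction H rule: finite_induct)
  case empty
  then show ?case by (simp add: N_zero)
next
  case (insert x F)
  have "(\<lambda>w. \<Sum>h\<in>insert x F. a h * f h w) = vadd (vsc (a x) (f x)) (\<lambda>w. \<Sum>h\<in>F. a h * f h w)"
    using insert by (simp add: vadd_def vsc_def)
  then show ?case using insert by (simp add: N_add N_vsc)
qed


lemma supp_sub_fst: "{p. u p \<noteq> 0} \<subseteq> (fst ` {p. u p \<noteq> 0}) \<times> UNIV"
proof
  fix p assume "p \<in> {p. u p \<noteq> 0}"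
  then have "fst p \<in> fst ` {p. u p \<noteq> 0}" by (rule imageI)
  then show "p \<in> (fst ` {p. u p \<noteq> 0}) \<times> UNIV" by (simp add: mem_Times_iff)
qed

lemma slice_sub_fst: "{w. u (w, h) \<noteq> 0} \<subseteq> fst ` {p. u p \<noteq> 0}"
proof
  fix w assume "w \<in> {w. u (w, h) \<noteq> 0}"
  then have "(w, h) \<in> {p. u p \<noteq> 0}" by simp
  then have "fst (w, h) \<in> fst ` {p. u p \<noteq> 0}" by (rule imageI)
  then show "w \<in> fst ` {p. u p \<noteq> 0}" by simp
qed

lemma fsupp_slice: "fsupp u \<Longrightarrow> fsupp (\<lambda>w. u (w, h))"
  unfolding fsupp_def by (rule finite_subset[of _ "fst ` {p. u p \<noteq> 0}"]) (auto simp: image_iff)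

context tr
begin

lemma inj_map_s: "inj (map \<sigma>)"
  using bij_s by (simp add: bij_def inj_mapI)

lemma Pw_apply: "Pw v (map \<sigma> w) = (if v = w then cw w else 0)"
  using inj_map_s by (auto simp: Pw_def vsc_def e_def inj_eq)

lemma surj_map_s: "w' = map \<sigma> (map (inv \<sigma>) w')"
  using bij_s by (simp add: map_idI bij_is_surj surj_f_inv_f)

lemma Phi_apply:
  assumes "fsupp u"
  shows "Phi u (map \<sigma> w) = cw w * u w"
proof (cases "u w = 0")
  case True
  then show ?thesis by (auto simp: Phi_def lin_apply Pw_apply intro!: sum.neutral)
next
  case False
  have "Phi u (map \<sigma> w) = (\<Sum>v\<in>{v. u v \<noteq> 0}. if v = w then u w * cw w else 0)"
    unfolding Phi_def lin_apply Pw_apply by (rule sum.cong) auto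
  also have "\<dots> = u w * cw w" using False assms by (simp add: fsupp_def)
  finally show ?thesis by simp
qed

lemma Phi_supp:
  assumes "Phi u w' \<noteq> 0"
  shows "\<exists>v. u v \<noteq> 0 \<and> w' = map \<sigma> v"
proof (rule ccontr)
  assume "\<not> ?thesis"
  then have "\<And>v. u v \<noteq> 0 \<Longrightarrow> Pw v w' = 0" by (auto simp: Pw_def vsc_def e_def)
  then have "Phi u w' = 0" by (auto simp: Phi_def lin_apply intro!: sum.neutral)
  then show False using assms by simp
qed

lemma Phi_TV: "u \<in> TV V \<Longrightarrow> Phi u \<in> TV W"
proof -
  assume u: "u \<in> TV V"
  have "fsupp (Phi u)" using u by (simp add: TV_def)
  moreover have "set w' \<subseteq> ybas W" if nz: "Phi u w' \<noteq> 0" for w'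
  proof -
    obtain v where "u v \<noteq> 0" "w' = map \<sigma> v" using Phi_supp[OF nz] by blast
    then show ?thesis using u bas by (auto simp: TV_def)
  qed
  ultimately show ?thesis by (simp add: TV_def)
qed

lemma Phi_comult:
  assumes "fsupp u"
  shows "lin (comultT W) (Phi u) = lin (\<lambda>(a, d). tens (Pw a) (Pw d)) (lin (comultT V) u)"
proof -
  have "lin (comultT W) (Phi u) = lin (\<lambda>w. lin (comultT W) (Pw w)) u"
    unfolding Phi_def by (rule lin_lin) (use assms in auto)
  also have "\<dots> = lin (\<lambda>w. lin (\<lambda>(a, d). tens (Pw a) (Pw d)) (comultT V w)) u"
    by (rule lin_cong) (subst Phi2_comultT, simp add: Pw_def lin_vsc)
  also have "\<dots> = lin (\<lambda>(a, d). tens (Pw a) (Pw d)) (lin (comultT V) u)"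
    by (rule lin_lin[symmetric]) (use assms in auto)
  finally show ?thesis .
qed

lemma adm_transport:
  assumes J: "nichols_admissible V J"
    and surjT: "\<And>a. a \<in> TV W \<Longrightarrow> \<exists>a'\<in>TV V. Phi a' = a"
  shows "nichols_admissible W (Phi ` J)"
proof -
  have JT: "J \<subseteq> TV V" using J by (simp add: nichols_admissible_def)
  have fJ: "fsupp u" if "u \<in> J" for u using JT that by (auto simp: TV_def)
  show ?thesis
    unfolding nichols_admissible_def
  proof (intro conjI ballI allI impI)
    show "Phi ` J \<subseteq> TV W" using JT Phi_TV by blast
    have "Phi vzero = vzero" by (simp add: Phi_def)
    moreover have "vzero \<in> J" using J by (simp add: nichols_admissible_def)
    ultimately show "vzero \<in> Phi ` J" by (metis image_eqI)
  next
    fix x y assume "x \<in> Phi ` J" "y \<in> Phi ` J"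
    then obtain u v where uv: "x = Phi u" "y = Phi v" "u \<in> J" "v \<in> J" by blast
    then have "vadd x y = Phi (vadd u v)" by (simp add: Phi_def lin_vadd fJ)
    moreover have "vadd u v \<in> J" using J uv by (simp add: nichols_admissible_def)
    ultimately show "vadd x y \<in> Phi ` J" by blast
  next
    fix a x assume "x \<in> Phi ` J"
    then obtain u where u: "x = Phi u" "u \<in> J" by blast
    then have "vsc a x = Phi (vsc a u)" by (simp add: Phi_def lin_vsc)
    moreover have "vsc a u \<in> J" using J u by (simp add: nichols_admissible_def)
    ultimately show "vsc a x \<in> Phi ` J" by blast
  next
    fix x n assume "x \<in> Phi ` J"
    then obtain u where u: "x = Phi u" "u \<in> J" by blast
    let ?un = "\<lambda>w. if length w = n then u w else 0"
    have fun0: "fsupp ?un" using fJ[OF u(2)] unfolding fsupp_def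
      by (rule finite_subset[rotated]) auto
    have "(\<lambda>w. if length w = n then x w else 0) = Phi ?un"
    proof
      fix w'
      obtain w where w: "w' = map \<sigma> w" using surj_map_s by blast
      show "(if length w' = n then x w' else 0) = Phi ?un w'"
        unfolding w u(1) Phi_apply[OF fJ[OF u(2)]] Phi_apply[OF fun0] by simp
    qed
    moreover have "?un \<in> J" using J u by (simp add: nichols_admissible_def)
    ultimately show "(\<lambda>w. if length w = n then x w else 0) \<in> Phi ` J" by blast
  next
    fix x and w' :: "'b list" assume "x \<in> Phi ` J" "length w' < 2"
    then obtain u where u: "x = Phi u" "u \<in> J" by blast
    obtain w where w: "w' = map \<sigma> w" using surj_map_s by blast
    have "u w = 0" using J u \<open>length w' < 2\<close> w by (simp add: nichols_admissible_def)
    then show "x w' = 0" unfolding w u(1) Phi_apply[OF fJ[OF u(2)]] by simp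
  next
    fix x a b assume "x \<in> Phi ` J" "a \<in> TV W" "b \<in> TV W"
    then obtain u where u: "x = Phi u" "u \<in> J" by blast
    obtain a' where a': "a' \<in> TV V" "Phi a' = a" using surjT \<open>a \<in> TV W\<close> by blast
    obtain b' where b': "b' \<in> TV V" "Phi b' = b" using surjT \<open>b \<in> TV W\<close> by blast
    have fa: "fsupp a'" "fsupp b'" using a' b' by (auto simp: TV_def)
    have "tmult (tmult a x) b = Phi (tmult (tmult a' u) b')"
      using fa fJ[OF u(2)] by (simp add: Phi_tmult u(1) a'(2)[symmetric] b'(2)[symmetric])
    moreover have "tmult (tmult a' u) b' \<in> J" using J u a' b' by (simp add: nichols_admissible_def)
    ultimately show "tmult (tmult a x) b \<in> Phi ` J" by blast
  next
    fix x assume "x \<in> Phi ` J"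
    then obtain u where u: "x = Phi u" "u \<in> J" by blast
    have c: "lin (comultT V) u \<in> coideal_target J (TV V)" using J u by (simp add: nichols_admissible_def)
    have "lin (comultT W) x = lin (\<lambda>(a, d). tens (Pw a) (Pw d)) (lin (comultT V) u)"
      using u Phi_comult fJ by simp
    also have "\<dots> \<in> coideal_target (Phi ` J) (TV W)"
      unfolding coideal_target_def
    proof (rule lspan_image[OF _ _ c[unfolded coideal_target_def]])
      fix s assume "s \<in> {tens j t |j t. j \<in> J \<and> t \<in> TV V} \<union> {tens t j |j t. j \<in> J \<and> t \<in> TV V}"
      then obtain j t where jt: "j \<in> J" "t \<in> TV V" "s = tens j t \<or> s = tens t j" by blast
      have ft: "fsupp j" "fsupp t" using jt fJ by (auto simp: TV_def)
      then show "fsupp s" using jt by auto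
      have "Phi j \<in> Phi ` J" "Phi t \<in> TV W" using jt Phi_TV by auto
      note P = this
      show "lin (\<lambda>(a, d). tens (Pw a) (Pw d)) s \<in> {tens j t |j t. j \<in> Phi ` J \<and> t \<in> TV W} \<union> {tens t j |j t. j \<in> Phi ` J \<and> t \<in> TV W}"
        using jt(3)
      proof (elim disjE)
        assume "s = tens j t"
        then have "lin (\<lambda>(a, d). tens (Pw a) (Pw d)) s = tens (Phi j) (Phi t)" using ft L2_tens by simp
        then show ?thesis using P by blast
      next
        assume "s = tens t j"
        then have "lin (\<lambda>(a, d). tens (Pw a) (Pw d)) s = tens (Phi t) (Phi j)" using ft L2_tens by simp
        then show ?thesis using P by blast
      qed
    qed
    finally show "lin (comultT W) x \<in> coideal_target (Phi ` J) (TV W)" .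
  qed
qed

lemma N_transport:
  assumes "\<And>a. a \<in> TV W \<Longrightarrow> \<exists>a'\<in>TV V. Phi a' = a" "u \<in> nichols_ideal V"
  shows "Phi u \<in> nichols_ideal W"
  using assms adm_transport unfolding nichols_ideal_def by blast

lemma linFm_apply:
  assumes "fsupp u"
  shows "lin Fm u (w', h') = (\<Sum>h\<in>UNIV. tau3b h h' * Phi (\<lambda>w. u (w, h)) w')"
proof -
  define A where "A = fst ` {p. u p \<noteq> 0}"
  have fA: "finite A" using assms by (simp add: A_def fsupp_def)
  have "lin Fm u (w', h') = (\<Sum>p\<in>A \<times> UNIV. u p * Fm p (w', h'))"
    by (rule lin_superset) (use fA supp_sub_fst[of u] in \<open>auto simp: A_def\<close>)
  also have "\<dots> = (\<Sum>w\<in>A. \<Sum>h\<in>UNIV. u (w, h) * (Pw w w' * tau3b h h'))"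
    by (simp add: sum.cartesian_product tens_def Fm_def ptens_def split_def)
  also have "\<dots> = (\<Sum>h\<in>UNIV. tau3b h h' * (\<Sum>w\<in>A. u (w, h) * Pw w w'))"
    by (subst sum.swap) (simp add: sum_distrib_left mult_ac)
  also have "\<dots> = (\<Sum>h\<in>UNIV. tau3b h h' * Phi (\<lambda>w. u (w, h)) w')"
  proof (rule sum.cong[OF refl])
    fix h
    have "Phi (\<lambda>w. u (w, h)) w' = (\<Sum>w\<in>A. u (w, h) * Pw w w')"
      unfolding Phi_def by (rule lin_superset) (use fA slice_sub_fst[of u h] in \<open>auto simp: A_def\<close>)
    then show "tau3b h h' * (\<Sum>w\<in>A. u (w, h) * Pw w w') = tau3b h h' * Phi (\<lambda>w. u (w, h)) w'" by simp
  qed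
  finally show ?thesis .
qed

lemma linFm_BV: "u \<in> BV V \<Longrightarrow> lin Fm u \<in> BV W"
proof -
  assume u: "u \<in> BV V"
  have fu: "fsupp u" using u by (simp add: BV_def)
  have "fsupp (lin Fm u)" using fu by simp
  moreover have "set w' \<subseteq> ybas W" if nz: "lin Fm u (w', h') \<noteq> 0" for w' h'
  proof -
    obtain h where "Phi (\<lambda>w. u (w, h)) w' \<noteq> 0"
      using nz unfolding linFm_apply[OF fu] by (metis (no_types, lifting) mult_zero_right sum.neutral)
    then obtain v where "u (v, h) \<noteq> 0" "w' = map \<sigma> v" using Phi_supp by blast
    moreover have "set v \<subseteq> ybas V" using u \<open>u (v, h) \<noteq> 0\<close> unfolding BV_def by blast
    ultimately show ?thesis using bas by auto
  qed
  ultimately show ?thesis unfolding BV_def by blast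
qed

lemma cw_nz: "cw w \<noteq> 0"
  by (induction w) (simp_all add: c_nz)

lemma vzero_NV: "vzero \<in> NV W"
  by (simp add: NV_def BV_def vzero_fun N_zero)

lemma vsub_self: "vsub u u = vzero" by (simp add: vsub_def vzero_def)

end

lemma prod_list_inv: "prod_list (map (\<lambda>b. 1 / c b) w) = 1 / prod_list (map c w :: 'k::field list)"
  by (induction w) simp_all

theorem bos_iso_tr:
  fixes V W :: "('k::field_char_0, 'b) ydm"
  assumes A: "tr V W \<sigma> c" and B: "tr W V \<sigma>' c'"
    and inv1: "\<And>b. \<sigma>' (\<sigma> b) = b" and inv2: "\<And>b. c' (\<sigma> b) = 1 / c b"
  shows "bos_iso V W"
proof -
  interpret A: tr V W \<sigma> c by (rule A)
  interpret B: tr W V \<sigma>' c' by (rule B)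
  have invs: "\<sigma>' (\<sigma> b) = b" for b by (rule inv1)
  have invs2: "map \<sigma>' (map \<sigma> w) = w" for w by (induction w) (simp_all add: invs)
  have invs3: "map (\<sigma>' \<circ> \<sigma>) w = w" for w using invs2[of w] by simp
  have Bcw: "B.cw (map \<sigma> w) = 1 / A.cw w" for w
    by (simp add: B.cw_def A.cw_def comp_def inv2 prod_list_inv)
  have BPw: "B.Pw (map \<sigma> w) = vsc (1 / A.cw w) (e w)" for w
    by (simp add: B.Pw_def Bcw invs3)
  have BA: "B.Phi (A.Pw w) = e w" for w
    using A.cw_nz[of w] by (simp add: A.Pw_def B.Phi_def lin_vsc BPw)
  have AB: "A.Phi (B.Pw w') = e w'" for w'
  proof -
    obtain w where w: "w' = map \<sigma> w" using A.surj_map_s by blast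
    show ?thesis using A.cw_nz[of w] unfolding w BPw by (simp add: A.Phi_def lin_vsc A.Pw_def)
  qed
  have BAu: "B.Phi (A.Phi u) = u" if "fsupp u" for u
  proof -
    have "B.Phi (A.Phi u) = lin (\<lambda>w. lin B.Pw (A.Pw w)) u"
      unfolding A.Phi_def B.Phi_def by (rule lin_lin) (use that in auto)
    then have "B.Phi (A.Phi u) = lin (\<lambda>w. B.Phi (A.Pw w)) u" by (simp only: B.Phi_def)
    then show ?thesis using that by (simp add: BA lin_id)
  qed
  have ABu: "A.Phi (B.Phi u) = u" if "fsupp u" for u
  proof -
    have "A.Phi (B.Phi u) = lin (\<lambda>w. lin A.Pw (B.Pw w)) u"
      unfolding A.Phi_def B.Phi_def by (rule lin_lin) (use that in auto)
    then have "A.Phi (B.Phi u) = lin (\<lambda>w. A.Phi (B.Pw w)) u" by (simp only: A.Phi_def)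
    then show ?thesis using that by (simp add: AB lin_id)
  qed
  have surjA: "\<exists>a'\<in>TV V. A.Phi a' = a" if "a \<in> TV W" for a
  proof
    show "B.Phi a \<in> TV V" using that by (rule B.Phi_TV)
    show "A.Phi (B.Phi a) = a" using that ABu by (simp add: TV_def)
  qed
  have surjB: "\<exists>a'\<in>TV W. B.Phi a' = a" if "a \<in> TV V" for a
  proof
    show "A.Phi a \<in> TV W" using that by (rule A.Phi_TV)
    show "B.Phi (A.Phi a) = a" using that BAu by (simp add: TV_def)
  qed
  have NA: "A.Phi u \<in> nichols_ideal W" if "u \<in> nichols_ideal V" for u
    by (rule A.N_transport[OF surjA that])
  have NB: "B.Phi u \<in> nichols_ideal V" if "u \<in> nichols_ideal W" for u
    by (rule B.N_transport[OF surjB that])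
  show ?thesis
    unfolding bos_iso_def
  proof (intro exI[of _ A.Fm] conjI ballI impI)
    fix p assume p: "p \<in> bbasis V"
    have "fsupp (e p :: _ \<Rightarrow> 'k)" by simp
    moreover have "\<forall>w h. (e p :: _ \<Rightarrow> 'k) (w, h) \<noteq> 0 \<longrightarrow> set w \<subseteq> ybas V"
      using p by (auto simp: bbasis_def e_def)
    ultimately have "e p \<in> BV V" by (simp add: BV_def)
    then have "lin A.Fm (e p) \<in> BV W" by (rule A.linFm_BV)
    then show "A.Fm p \<in> BV W" by simp
  next
    fix u assume u: "u \<in> NV V"
    have uB: "u \<in> BV V" and fu: "fsupp u" using u by (auto simp: NV_def BV_def)
    have "(\<lambda>w'. lin A.Fm u (w', h')) \<in> nichols_ideal W" for h'
    proof -
      have "(\<lambda>w'. lin A.Fm u (w', h')) = (\<lambda>w'. \<Sum>h\<in>UNIV. tau3b h h' * A.Phi (\<lambda>w. u (w, h)) w')"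
        using A.linFm_apply[OF fu] by simp
      also have "\<dots> \<in> nichols_ideal W"
        by (rule N_comb) (use u NA in \<open>auto simp: NV_def\<close>)
      finally show ?thesis .
    qed
    then show "lin A.Fm u \<in> NV W" using A.linFm_BV[OF uB] by (simp add: NV_def)
  next
    fix u assume uB: "u \<in> BV V" and NF: "lin A.Fm u \<in> NV W"
    have fu: "fsupp u" using uB by (simp add: BV_def)
    have "(\<lambda>w. u (w, h0)) \<in> nichols_ideal V" for h0
    proof -
      have slices: "(\<lambda>w'. lin A.Fm u (w', h')) \<in> nichols_ideal W" for h'
        using NF unfolding NV_def by blast
      have "A.Phi (\<lambda>w. u (w, h0)) = (\<lambda>w'. \<Sum>h'\<in>UNIV. tau3b h' h0 * lin A.Fm u (w', h'))"
      proof
        fix w'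
        have "(\<Sum>h'\<in>UNIV. tau3b h' h0 * lin A.Fm u (w', h'))
            = (\<Sum>h'\<in>UNIV. \<Sum>h\<in>UNIV. tau3b h' h0 * (tau3b h h' * A.Phi (\<lambda>w. u (w, h)) w'))"
          by (simp add: A.linFm_apply[OF fu] sum_distrib_left)
        also have "\<dots> = (\<Sum>h\<in>UNIV. (\<Sum>h'\<in>UNIV. tau3b h h' * tau3b h' h0) * A.Phi (\<lambda>w. u (w, h)) w')"
          by (subst sum.swap) (simp add: sum_distrib_right sum_distrib_left mult_ac)
        also have "\<dots> = (\<Sum>h\<in>UNIV. e h h0 * A.Phi (\<lambda>w. u (w, h)) w')"
        proof -
          have "(\<Sum>h'\<in>UNIV. tau3b h h' * tau3b h' h0) = (e h h0 :: 'k)" for h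
          proof -
            have "lin tau3b (tau3b h) h0 = (e h h0 :: 'k)" by (simp add: tau3_invol)
            then show ?thesis by (simp add: lin_fin)
          qed
          then show ?thesis by simp
        qed
        also have "\<dots> = A.Phi (\<lambda>w. u (w, h0)) w'"
          by (simp add: e_def if_distrib[of "\<lambda>x. x * _"] sum.delta cong: if_cong)
        finally show "A.Phi (\<lambda>w. u (w, h0)) w' = (\<Sum>h'\<in>UNIV. tau3b h' h0 * lin A.Fm u (w', h'))" by simp
      qed
      also have "\<dots> \<in> nichols_ideal W" by (rule N_comb) (use slices in auto)
      finally have "A.Phi (\<lambda>w. u (w, h0)) \<in> nichols_ideal W" .
      then have "B.Phi (A.Phi (\<lambda>w. u (w, h0))) \<in> nichols_ideal V" by (rule NB)
      then show ?thesis using BAu[OF fsupp_slice[OF fu]] by simp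
    qed
    then show "u \<in> NV V" using uB by (simp add: NV_def)
  next
    fix u' assume u': "u' \<in> BV W"
    have fu': "fsupp u'" using u' by (simp add: BV_def)
    have "lin A.Fm (lin B.Fm u') = lin (\<lambda>p. lin A.Fm (B.Fm p)) u'"
      by (rule lin_lin) (use fu' in auto)
    also have "\<dots> = lin e u'"
    proof (rule lin_cong)
      fix p :: "'b list \<times> hb"
      obtain w' h' where p: "p = (w', h')" by (cases p)
      have "lin A.Fm (B.Fm p) = tens (A.Phi (B.Pw w')) (lin tau3b (tau3b h'))"
        unfolding p B.Fm_simp by (rule A.Fm_tens) simp
      then show "lin A.Fm (B.Fm p) = e p" by (simp add: AB tau3_invol p)
    qed
    also have "\<dots> = u'" using fu' by (simp add: lin_id)
    finally have "lin A.Fm (lin B.Fm u') = u'" .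
    moreover have "lin B.Fm u' \<in> BV V" by (rule B.linFm_BV[OF u'])
    ultimately show "\<exists>u\<in>BV V. vsub (lin A.Fm u) u' \<in> NV W"
      using A.vzero_NV A.vsub_self by metis
  next
    have "lin A.Fm bunit = bunit"
      by (simp add: bunit_def A.Pw_def tau3_unit)
    then show "vsub (lin A.Fm bunit) bunit \<in> NV W" using A.vzero_NV A.vsub_self by metis
  next
    fix p q assume "p \<in> bbasis V" "q \<in> bbasis V"
    obtain w h where p: "p = (w, h)" by (cases p)
    obtain w' h' where q: "q = (w', h')" by (cases q)
    show "vsub (lin A.Fm (bm V p q)) (bmult W (A.Fm p) (A.Fm q)) \<in> NV W"
      unfolding p q A.bm_transport A.vsub_self by (rule A.vzero_NV)
  next
    fix p assume "p \<in> bbasis V"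
    obtain w h where p: "p = (w, h)" by (cases p)
    show "vsub (lin (bc W) (A.Fm p)) (lin (\<lambda>(p1, p2). tens (A.Fm p1) (A.Fm p2)) (bc V p))
        \<in> lspan ({tens n a |n a. n \<in> NV W \<and> a \<in> BV W} \<union> {tens a n |n a. n \<in> NV W \<and> a \<in> BV W})"
      unfolding p A.bc_transport A.vsub_self vzero_fun by (rule lspan_zero)
  next
    fix p assume "p \<in> bbasis V"
    obtain w h where p: "p = (w, h)" by (cases p)
    have "lin (\<lambda>q (_::unit). bcounit q) (A.Fm (w, h)) = vsc (A.cw w) (lin (\<lambda>k (_::unit). bcounit (map \<sigma> w, k)) (tau3b h))"
      by (simp add: A.Pw_def tens_vsc1 lin_vsc lin_tens)
    also have "\<dots> = vsc (A.cw w) (\<lambda>_. counitT (map \<sigma> w))"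
      by (simp add: bcounit_def h8counit_def lin_const_fin tau3_counit)
    finally have "lin (\<lambda>q (_::unit). bcounit q) (A.Fm (w, h)) () = A.cw w * counitT (map \<sigma> w)"
      by (simp add: vsc_def)
    also have "\<dots> = bcounit (w, h)"
      by (cases w) (simp_all add: bcounit_def counitT_def h8counit_def)
    finally show "lin (\<lambda>q (_::unit). bcounit q) (A.Fm p) () = bcounit p" by (simp add: p)
  qed
qed


lemma sum_unit: "(\<Sum>x\<in>(UNIV::unit set). f x) = f ()" by (simp add: UNIV_unit)

lemma Mbg_act: "yact (Mbg b0 g) (a, b, c) () =
   vsc ((if a then b0 * b0 else 1) * (if b then b0 * b0 else 1) * (if c then b0 else 1)) (e ())"
  by (cases a; cases b; cases c; simp add: Mbg_def gen_act_def lin_vsc power2_eq_square mult_ac)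

lemma Mbg_act_pt: "yact (Mbg b0 g) (a, b, c) () () =
   (if a then b0 * b0 else 1) * (if b then b0 * b0 else 1) * (if c then b0 else 1)"
  by (simp add: Mbg_act vsc_def e_def)

lemma tau3b_hx: "tau3b hx = (e hy :: _ \<Rightarrow> 'k::field_char_0)"
  unfolding tau3b_eq by (auto simp: T3C_def e_def hx_def hy_def fun_eq_iff)
lemma tau3b_hy: "tau3b hy = (e hx :: _ \<Rightarrow> 'k::field_char_0)"
  unfolding tau3b_eq by (auto simp: T3C_def e_def hx_def hy_def fun_eq_iff)
lemma tau3b_hxy: "tau3b hxy = (e hxy :: _ \<Rightarrow> 'k::field_char_0)"
  unfolding tau3b_eq by (auto simp: T3C_def e_def hxy_def fun_eq_iff)

lemma lin_unit_ext: "(u :: unit \<Rightarrow> 'k) = v \<longleftrightarrow> u () = v ()"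
  by (auto simp: fun_eq_iff)

lemma tr_Mbg:
  fixes b0 :: "'k::field_char_0"
  assumes b0: "b0 * b0 = -1" and g: "(g, g') \<in> {(hx, hy), (hy, hx)}"
  shows "tr (Mbg b0 g) (Mbg (- b0) g') id (\<lambda>_. 1)"
proof
  show "bij (id :: unit \<Rightarrow> unit)" by simp
  show "(1::'k) \<noteq> 0" by simp
  show "id ` ybas (Mbg b0 g) = ybas (Mbg (- b0) g')" by (simp add: Mbg_def)
  show "fsupp (yact (Mbg b0 g) h b)" "fsupp (ycoact (Mbg b0 g) b)"
    "fsupp (yact (Mbg (- b0) g') h b)" "fsupp (ycoact (Mbg (- b0) g') b)" for h b by simp_all
next
  fix h :: hb and b :: unit
  obtain x y z where h: "h = (x, y, z)" by (cases h)
  have "yact (Mbg (- b0) g') h () () = lin (\<lambda>g0. yact (Mbg b0 g) g0 ()) (tau3b h) ()"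
    unfolding h lin_fin tau3b_eq
    using b0 by (cases x; cases y; cases z; simp add: sum_hb Mbg_act_pt T3C_def algebra_simps)
  then show "vsc 1 (yact (Mbg (- b0) g') h (id b)) = lin (\<lambda>g0. lin (\<lambda>d. vsc 1 (e (id d))) (yact (Mbg b0 g) g0 b)) (tau3b h)"
    by (simp add: lin_id lin_unit_ext)
next
  fix b :: unit
  show "vsc 1 (ycoact (Mbg (- b0) g') (id b)) = lin (\<lambda>(g0, d). tens (tau3b g0) (vsc 1 (e (id d)))) (ycoact (Mbg b0 g) b)"
    using g by (auto simp: Mbg_def tau3b_hx tau3b_hy)
qed

lemma Mpair_act_pt: "yact (Mpair g1 g2) (a, b, c) v q =
   (if q = (v \<noteq> c) then (if a \<and> q then -1 else 1) * (if b \<and> \<not> q then -1 else 1) else (0::'k::field_char_0))"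
  by (cases a; cases b; cases c; cases v; cases q; simp add: Mpair_def gen_act_def lin_fin sum_bool vsc_def e_def)

lemma tr_Mpair:
  assumes g: "(g1, g2, g1', g2') \<in> {(hxy, hx, hy, hxy), (hy, hxy, hxy, hx)}"
  shows "tr (Mpair g1 g2 :: ('k::field_char_0, bool) ydm) (Mpair g1' g2') Not (\<lambda>_. 1)"
proof
  show "bij Not" by (simp add: bij_def inj_def surj_def) (metis (full_types))
  show "(1::'k) \<noteq> 0" by simp
  show "Not ` ybas (Mpair g1 g2 :: ('k, bool) ydm) = ybas (Mpair g1' g2' :: ('k, bool) ydm)"
    by (simp add: Mpair_def) (metis (full_types) surj_def bij_def[of Not] \<open>bij Not\<close>)
  show "fsupp (yact (Mpair g1 g2 :: ('k, bool) ydm) h b)" "fsupp (ycoact (Mpair g1 g2 :: ('k, bool) ydm) b)"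
    "fsupp (yact (Mpair g1' g2' :: ('k, bool) ydm) h b)" "fsupp (ycoact (Mpair g1' g2' :: ('k, bool) ydm) b)" for h b by simp_all
next
  fix h :: hb and v :: bool
  obtain x y z where h: "h = (x, y, z)" by (cases h)
  have "vsc 1 (yact (Mpair g1' g2' :: ('k, bool) ydm) h (\<not> v)) q = lin (\<lambda>g0. lin (\<lambda>d. vsc 1 (e (\<not> d))) (yact (Mpair g1 g2) g0 v)) (tau3b h) q" for q
    unfolding h lin_fin tau3b_eq
    by (cases x; cases y; cases z; cases v; cases q; simp add: sum_hb sum_bool Mpair_act_pt T3C_def e_def)
  then show "vsc 1 (yact (Mpair g1' g2' :: ('k, bool) ydm) h (\<not> v)) = lin (\<lambda>g0. lin (\<lambda>d. vsc 1 (e (\<not> d))) (yact (Mpair g1 g2) g0 v)) (tau3b h)"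
    by (simp add: fun_eq_iff)
next
  fix v :: bool
  show "vsc 1 (ycoact (Mpair g1' g2') (\<not> v)) = lin (\<lambda>(g0, d). tens (tau3b g0) (vsc 1 (e (\<not> d)))) (ycoact (Mpair g1 g2 :: ('k, bool) ydm) v)"
    using g by (cases v) (auto simp: Mpair_def tau3b_hx tau3b_hy tau3b_hxy)
qed

lemma Wmod_act_pt: "yact (Wmod i b1) (a, b, c) v q =
   (if q = v then (if v then (if a then -1 else 1) * (if b then -1 else 1) * (if c then i * b1 else 1)
                   else (if c then -1 else 1)) else (0::'k::field_char_0))"
  by (cases a; cases b; cases c; cases v; cases q; simp add: Wmod_def gen_act_def lin_fin sum_bool vsc_def e_def)

lemma f_idem_pt: "f_idem j k (a, b, c) = (if c then 0 else 1/4 * (if a then (-1)^j else 1) * (if b then (-1)^k else 1) :: 'k::field_char_0)"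
  unfolding f_idem_def h8mult_def bil_def lin_fin h8m_MC
  by (cases a; cases b; cases c; simp add: sum_hb MC_def vsc_def vadd_def e_def h1_def hx_def hy_def algebra_simps)

definition sg :: "bool \<Rightarrow> 'k::field_char_0" where "sg a = (if a then -1 else 1)"

lemma Wmod_co_pt: "ycoact (Wmod i b1) v ((a, b, c), d) =
   (if c then 1/4 * (if d = v then 1 + (if v then 1 else -1) * (i * b1) * (sg a * sg b)
                     else sg a + (if v then -1 else 1) * (i * b1) * sg b) else (0::'k::field_char_0))"
  unfolding Wmod_def
  by (cases a; cases b; cases c; cases v; cases d;
      simp add: h8mult_def bil_def lin_fin h8m_MC sum_hb MC_def vsc_def vadd_def vsub_def e_def tens_def
         f_idem_pt hz_def sg_def algebra_simps)

lemma tr_Wmod: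
  fixes i b1 :: "'k::field_char_0"
  assumes i: "i * i = -1" and b1: "b1 = 1 \<or> b1 = -1"
  shows "tr (Wmod i b1) (Wmod i (- b1)) id (\<lambda>v. if v then - i * b1 else 1)"
proof
  have i2: "i * (i * x) = - x" for x using i by (metis mult.assoc mult_minus1)
  show "bij (id :: bool \<Rightarrow> bool)" by simp
  show "(if v then - i * b1 else 1) \<noteq> 0" for v using i b1 by auto
  show "id ` ybas (Wmod i b1) = ybas (Wmod i (- b1))" by (simp add: Wmod_def)
  show "fsupp (yact (Wmod i b1) h b)" "fsupp (ycoact (Wmod i b1) b)"
    "fsupp (yact (Wmod i (- b1)) h b)" "fsupp (ycoact (Wmod i (- b1)) b)" for h b by simp_all
next
  have i2: "i * (i * x) = - x" for x using i by (metis mult.assoc mult_minus1)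
  fix h :: hb and v :: bool
  obtain x y z where h: "h = (x, y, z)" by (cases h)
  have "vsc (if v then - i * b1 else 1) (yact (Wmod i (- b1)) h (id v)) q
     = lin (\<lambda>g0. lin (\<lambda>d. vsc (if d then - i * b1 else 1) (e (id d))) (yact (Wmod i b1) g0 v)) (tau3b h) q" for q
    unfolding h lin_fin tau3b_eq
    using b1 by (cases x; cases y; cases z; cases v; cases q; auto simp: sum_hb sum_bool Wmod_act_pt T3C_def e_def vsc_def algebra_simps i i2)
  then show "vsc (if v then - i * b1 else 1) (yact (Wmod i (- b1)) h (id v))
     = lin (\<lambda>g0. lin (\<lambda>d. vsc (if d then - i * b1 else 1) (e (id d))) (yact (Wmod i b1) g0 v)) (tau3b h)"
    by (simp add: fun_eq_iff)
next
  have i2: "i * (i * x) = - x" for x using i by (metis mult.assoc mult_minus1)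
  fix v :: bool
  have "vsc (if v then - i * b1 else 1) (ycoact (Wmod i (- b1)) (id v)) ((a, b, c), d)
     = lin (\<lambda>(g0, d). tens (tau3b g0) (vsc (if d then - i * b1 else 1) (e (id d)))) (ycoact (Wmod i b1) v) ((a, b, c), d)" for a b c d
    unfolding lin_fin tau3b_eq
    using b1 apply (cases a; cases b; cases c; cases v; cases d;
      auto simp: sum_prod_UNIV sum_bool Wmod_co_pt T3C_def e_def vsc_def tens_def sg_def algebra_simps i i2)
    apply (simp_all add: field_simps)
    done
  then show "vsc (if v then - i * b1 else 1) (ycoact (Wmod i (- b1)) (id v))
     = lin (\<lambda>(g0, d). tens (tau3b g0) (vsc (if d then - i * b1 else 1) (e (id d)))) (ycoact (Wmod i b1) v)"
    by (simp add: fun_eq_iff)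
qed

lemma tau3_e: "tau3 (e h) = tau3b h" by (simp add: tau3_def)

lemma yd_iso_tr:
  fixes V W :: "('k::field_char_0, 'b::finite) ydm"
  assumes T: "tr V W \<sigma> c" and bV: "ybas V = UNIV" and bW: "ybas W = UNIV"
  shows "yd_iso (twist tau3 V) W"
proof -
  interpret tr V W \<sigma> c by (rule T)
  define G where "G = (\<lambda>b'. vsc (1 / c (inv \<sigma> b')) (e (inv \<sigma> b')) :: 'b \<Rightarrow> 'k)"
  have VspV: "Vsp (twist tau3 V) = UNIV" and VspW: "Vsp W = UNIV"
    by (auto simp: Vsp_def twist_def bV bW)
  have is1: "inv \<sigma> (\<sigma> b) = b" for b using bij_s by (simp add: bij_is_inj)
  have is2: "\<sigma> (inv \<sigma> b) = b" for b using bij_s by (simp add: bij_is_surj surj_f_inv_f)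
  have GF: "lin G (lin phi u) = u" for u
  proof -
    have "lin G (lin phi u) = lin (\<lambda>b. lin G (phi b)) u" by (rule lin_lin) auto
    also have "\<dots> = lin e u" using c_nz by (simp add: phi_def lin_vsc G_def is1)
    finally show ?thesis by (simp add: lin_id)
  qed
  have FG: "lin phi (lin G u) = u" for u
  proof -
    have "lin phi (lin G u) = lin (\<lambda>b. lin phi (G b)) u" by (rule lin_lin) (auto simp: G_def)
    also have "\<dots> = lin e u" using c_nz by (simp add: phi_def lin_vsc G_def is2)
    finally show ?thesis by (simp add: lin_id)
  qed
  show ?thesis
    unfolding yd_iso_def
  proof (intro exI[of _ phi] conjI ballI allI)
    show "phi b \<in> Vsp W" for b by (simp add: VspW)
    show "bij_betw (lin phi) (Vsp (twist tau3 V)) (Vsp W)"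
      unfolding VspV VspW by (rule bij_betw_byWitness[of _ "lin G"]) (auto simp: GF FG)
  next
    fix h b
    have "lin phi (yact (twist tau3 V) h b) = lin (\<lambda>g. lin phi (yact V g b)) (tau3b h)"
      by (simp add: twist_def tau3_e lin_lin)
    also have "\<dots> = vsc (c b) (yact W h (\<sigma> b))" by (simp add: act phi_eq)
    also have "\<dots> = lin (yact W h) (phi b)" by (simp add: phi_def lin_vsc)
    finally show "lin (yact W h) (phi b) = lin phi (yact (twist tau3 V) h b)" by simp
  next
    fix b
    have "lin (\<lambda>(g, c'). tens (e g) (phi c')) (ycoact (twist tau3 V) b)
        = lin (\<lambda>(g, c'). tens (e g) (phi c')) (lin (\<lambda>(g, c'). tens (tau3b g) (e c')) (ycoact V b))"
      by (simp add: twist_def inv_tau3 tau3_e)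
    also have "\<dots> = lin (\<lambda>(g, c'). lin (\<lambda>(g, c'). tens (e g) (phi c')) (tens (tau3b g) (e c'))) (ycoact V b)"
      by (rule lin_lin_pair) auto
    also have "\<dots> = lin (\<lambda>(g, d). tens (tau3b g) (phi d)) (ycoact V b)"
    proof (rule lin_cong, clarify)
      fix g c'
      have "lin (\<lambda>(g, c'). tens (e g) (phi c')) (tens (tau3b g) (e c')) = lin (\<lambda>x. tens (e x) (phi c')) (tau3b g)"
        by (simp add: lin_tens)
      also have "\<dots> = tens (lin e (tau3b g)) (phi c')" by (simp add: tens_lin1)
      finally show "lin (\<lambda>(g, c'). tens (e g) (phi c')) (tens (tau3b g) (e c')) = tens (tau3b g) (phi c')"
        by (simp add: lin_id)
    qed
    also have "\<dots> = vsc (c b) (ycoact W (\<sigma> b))" by (simp add: coact2)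
    also have "\<dots> = lin (ycoact W) (phi b)" by (simp add: phi_def lin_vsc)
    finally show "lin (\<lambda>(g, c'). tens (e g) (phi c')) (ycoact (twist tau3 V) b) = lin (ycoact W) (phi b)" .
  qed
qed


definition swp :: "('b \<Rightarrow> 'b) \<Rightarrow> ('a + ('a + 'b)) \<Rightarrow> ('a + ('a + 'b))" where
  "swp s x = (case x of Inl a \<Rightarrow> Inr (Inl a) | Inr (Inl a) \<Rightarrow> Inl a | Inr (Inr p) \<Rightarrow> Inr (Inr (s p)))"

definition swc :: "('b \<Rightarrow> 'k::field) \<Rightarrow> ('a + ('a + 'b)) \<Rightarrow> 'k" where
  "swc cc x = (case x of Inr (Inr p) \<Rightarrow> cc p | _ \<Rightarrow> 1)"

lemma swp_simps[simp]: "swp s (Inl a) = Inr (Inl a)" "swp s (Inr (Inl a)) = Inl a" "swp s (Inr (Inr p)) = Inr (Inr (s p))"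
  by (simp_all add: swp_def)
lemma swc_simps[simp]: "swc cc (Inl a) = 1" "swc cc (Inr (Inl a)) = 1" "swc cc (Inr (Inr p)) = cc p"
  by (simp_all add: swc_def)

lemma vmap_vmap: "fsupp u \<Longrightarrow> vmap f (vmap g u) = vmap (\<lambda>x. f (g x)) u"
  unfolding vmap_def[of f] by (subst lin_vmap) (auto simp: vmap_def)

lemma vmap_snd_tens:
  assumes "fsupp X" "fsupp Y"
  shows "vmap (\<lambda>(g, x). (g, f x)) (tens X Y) = tens X (vmap f Y)"
proof -
  have "vmap (\<lambda>(g, x). (g, f x)) (tens X Y) = lin (\<lambda>p. lin (\<lambda>q. e (p, f q)) Y) X"
    unfolding vmap_def by (subst lin_tens) (use assms in auto)
  also have "\<dots> = tens (lin e X) (lin (\<lambda>q. e (f q)) Y)"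
    by (subst tens_lin) (use assms in auto)
  finally show ?thesis using assms by (simp add: lin_id vmap_def)
qed

lemma tr_unit_act: "tr P P' id (\<lambda>_. 1) \<Longrightarrow> yact P' h u = lin (\<lambda>g. yact P g u) (tau3b h)"
proof -
  assume "tr P P' id (\<lambda>_. 1)"
  then interpret tr P P' id "\<lambda>_. 1" .
  show ?thesis using act[of h u] by (simp add: lin_id)
qed

lemma tr_unit_coact: "tr P P' id (\<lambda>_. 1) \<Longrightarrow> ycoact P' u = lin (\<lambda>(g, d). tens (tau3b g) (e d)) (ycoact P u)"
proof -
  assume "tr P P' id (\<lambda>_. 1)"
  then interpret tr P P' id "\<lambda>_. 1" .
  show ?thesis using coact[of u] by simp
qed

lemma ydsum_simps:
  "yact (ydsum X Y) h (Inl b) = vmap Inl (yact X h b)"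
  "yact (ydsum X Y) h (Inr c) = vmap Inr (yact Y h c)"
  "ycoact (ydsum X Y) (Inl b) = vmap (\<lambda>(g, b'). (g, Inl b')) (ycoact X b)"
  "ycoact (ydsum X Y) (Inr c) = vmap (\<lambda>(g, c'). (g, Inr c')) (ycoact Y c)"
  "ybas (ydsum X Y) = Inl ` ybas X \<union> Inr ` ybas Y"
  by (simp_all add: ydsum_def)

lemma ydpow_simps:
  "yact (ydpow n X) h (j, b) = vmap (\<lambda>b'. (j, b')) (yact X h b)"
  "ycoact (ydpow n X) (j, b) = vmap (\<lambda>(g, b'). (g, (j, b'))) (ycoact X b)"
  "ybas (ydpow n X) = {(j, b). j < n \<and> b \<in> ybas X}"
  by (simp_all add: ydpow_def)

lemma vmap_lin_pair:
  assumes "fsupp u" "\<And>a b. fsupp (g a b)"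
  shows "vmap f (lin (\<lambda>(a, b). g a b) u) = lin (\<lambda>(a, b). vmap f (g a b)) u"
  unfolding vmap_def by (rule lin_lin_pair) (use assms in auto)

lemma tr_omega:
  fixes P Q P' Q' :: "('k::field_char_0, unit) ydm" and R R' :: "('k, bool) ydm"
  assumes P: "tr P P' id (\<lambda>_. 1)" and Q: "tr Q Q' id (\<lambda>_. 1)" and R: "tr R R' s cc"
    and bas: "ybas P = UNIV" "ybas P' = UNIV" "ybas Q = UNIV" "ybas Q' = UNIV" "ybas R = UNIV" "ybas R' = UNIV"
  shows "tr (ydsum (ydpow n1 P) (ydsum (ydpow n2 Q) R)) (ydsum (ydpow n2 Q') (ydsum (ydpow n1 P') R')) (swp s) (swc cc)"
proof -
  interpret RR: tr R R' s cc by (rule R)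
  have is1: "inv s (s b) = b" for b using RR.bij_s by (simp add: bij_is_inj)
  have is2: "s (inv s b) = b" for b using RR.bij_s by (simp add: bij_is_surj surj_f_inv_f)
  have sw1: "swp (inv s) (swp s x) = x" for x :: "(nat \<times> unit) + ((nat \<times> unit) + bool)"
    by (auto simp: swp_def is1 split: sum.splits)
  have sw2: "swp s (swp (inv s) x) = x" for x :: "(nat \<times> unit) + ((nat \<times> unit) + bool)"
    by (auto simp: swp_def is2 split: sum.splits)
  define V where "V = ydsum (ydpow n1 P) (ydsum (ydpow n2 Q) R)"
  define W where "W = ydsum (ydpow n2 Q') (ydsum (ydpow n1 P') R')"
  have fsV: "fsupp (yact V h x)" "fsupp (ycoact V x)" for h x
    by (auto simp: V_def ydsum_def ydpow_def split: sum.splits prod.splits)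
  have fsW: "fsupp (yact W h x)" "fsupp (ycoact W x)" for h x
    by (auto simp: W_def ydsum_def ydpow_def split: sum.splits prod.splits)
  have "tr V W (swp s) (swc cc)"
  proof
    show "bij (swp s :: (nat \<times> unit) + ((nat \<times> unit) + bool) \<Rightarrow> _)" by (rule bij_betw_byWitness[of _ "swp (inv s)"]) (auto simp: sw1 sw2)
    show "swc cc x \<noteq> 0" for x :: "(nat \<times> unit) + ((nat \<times> unit) + bool)" by (auto simp: swc_def RR.c_nz split: sum.splits)
    show "swp s ` ybas V = ybas W"
    proof (rule set_eqI)
      fix x :: "(nat \<times> unit) + ((nat \<times> unit) + bool)"
      have "x \<in> swp s ` ybas V \<longleftrightarrow> swp (inv s) x \<in> ybas V"
      proof
        assume "x \<in> swp s ` ybas V"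
        then obtain a where "a \<in> ybas V" "x = swp s a" by blast
        then show "swp (inv s) x \<in> ybas V" using sw1 by simp
      next
        assume "swp (inv s) x \<in> ybas V"
        then have "swp s (swp (inv s) x) \<in> swp s ` ybas V" by (rule imageI)
        then show "x \<in> swp s ` ybas V" using sw2 by simp
      qed
      also have "\<dots> \<longleftrightarrow> x \<in> ybas W"
        by (auto simp: V_def W_def ydsum_def ydpow_def bas swp_def image_iff split: sum.splits)
      finally show "x \<in> swp s ` ybas V \<longleftrightarrow> x \<in> ybas W" .
    qed
    show "fsupp (yact V h b)" "fsupp (ycoact V b)" "fsupp (yact W h b)" "fsupp (ycoact W b)" for h b
      by (simp_all add: fsV fsW)
  next
    fix h x
    show "vsc (swc cc x) (yact W h (swp s x)) = lin (\<lambda>g. lin (\<lambda>d. vsc (swc cc d) (e (swp s d))) (yact V g x)) (tau3b h)"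
    proof (cases x rule: sum.exhaust)
      case (Inl a)
      obtain j u where a: "a = (j, u)" by (cases a)
      define F where "F = (\<lambda>d. Inr (Inl (j, d)) :: (nat \<times> unit) + ((nat \<times> unit) + bool))"
      have L: "yact W h (swp s x) = vmap F (yact P' h u)"
        by (simp add: Inl a W_def F_def ydsum_simps ydpow_simps vmap_vmap)
      have R: "lin (\<lambda>d. vsc (swc cc d) (e (swp s d))) (yact V g x) = vmap F (yact P g u)" for g
        by (simp add: Inl a V_def F_def ydsum_simps ydpow_simps vmap_vmap lin_vmap) (simp add: vmap_def)
      have "vsc (swc cc x) (yact W h (swp s x)) = vmap F (yact P' h u)" using L by (simp add: Inl)
      also have "\<dots> = vmap F (lin (\<lambda>g. yact P g u) (tau3b h))" by (simp add: tr_unit_act[OF P])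
      also have "\<dots> = lin (\<lambda>g. vmap F (yact P g u)) (tau3b h)"
        by (rule vmap_lin) auto
      also have "\<dots> = lin (\<lambda>g. lin (\<lambda>d. vsc (swc cc d) (e (swp s d))) (yact V g x)) (tau3b h)"
        by (simp only: R)
      finally show ?thesis .
    next
      case (Inr y)
      show ?thesis
      proof (cases y rule: sum.exhaust)
        case (Inl a)
        obtain j u where a: "a = (j, u)" by (cases a)
        define F where "F = (\<lambda>d. Inl (j, d) :: (nat \<times> unit) + ((nat \<times> unit) + bool))"
        have L: "yact W h (swp s x) = vmap F (yact Q' h u)"
          by (simp add: Inr Inl a W_def F_def ydsum_simps ydpow_simps vmap_vmap)
        have R: "lin (\<lambda>d. vsc (swc cc d) (e (swp s d))) (yact V g x) = vmap F (yact Q g u)" for g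
          by (simp add: Inr Inl a V_def F_def ydsum_simps ydpow_simps vmap_vmap lin_vmap) (simp add: vmap_def)
        have "vsc (swc cc x) (yact W h (swp s x)) = vmap F (yact Q' h u)" using L by (simp add: Inr Inl)
        also have "\<dots> = vmap F (lin (\<lambda>g. yact Q g u) (tau3b h))" by (simp add: tr_unit_act[OF Q])
        also have "\<dots> = lin (\<lambda>g. vmap F (yact Q g u)) (tau3b h)"
          by (rule vmap_lin) auto
        also have "\<dots> = lin (\<lambda>g. lin (\<lambda>d. vsc (swc cc d) (e (swp s d))) (yact V g x)) (tau3b h)"
          by (simp only: R)
        finally show ?thesis .
      next
        case (Inr p)
        define F where "F = (\<lambda>d. Inr (Inr d) :: (nat \<times> unit) + ((nat \<times> unit) + bool))"
        have L: "vsc (swc cc x) (yact W h (swp s x)) = vmap F (vsc (cc p) (yact R' h (s p)))"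
          by (simp add: \<open>x = Inr y\<close> Inr W_def F_def ydsum_simps vmap_vmap vmap_vsc)
        also have "\<dots> = vmap F (lin (\<lambda>g. lin (\<lambda>d. vsc (cc d) (e (s d))) (yact R g p)) (tau3b h))"
          by (simp add: RR.act)
        also have "\<dots> = lin (\<lambda>g. lin (\<lambda>d. vsc (cc d) (e (F (s d)))) (yact R g p)) (tau3b h)"
          by (simp add: vmap_lin vmap_vsc)
        also have "\<dots> = lin (\<lambda>g. lin (\<lambda>d. vsc (swc cc d) (e (swp s d))) (yact V g x)) (tau3b h)"
          by (simp add: \<open>x = Inr y\<close> Inr V_def F_def ydsum_simps vmap_vmap lin_vmap)
        finally show ?thesis .
      qed
    qed
  next
    fix x
    show "vsc (swc cc x) (ycoact W (swp s x)) = lin (\<lambda>(g, d). tens (tau3b g) (vsc (swc cc d) (e (swp s d)))) (ycoact V x)"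
    proof (cases x rule: sum.exhaust)
      case (Inl a)
      obtain j u where a: "a = (j, u)" by (cases a)
      define F where "F = (\<lambda>d. Inr (Inl (j, d)) :: (nat \<times> unit) + ((nat \<times> unit) + bool))"
      have L: "ycoact W (swp s x) = vmap (\<lambda>(g, d). (g, F d)) (ycoact P' u)"
        by (simp add: Inl a W_def F_def ydsum_simps ydpow_simps vmap_vmap split_def)
      also have "\<dots> = lin (\<lambda>(g, d). tens (tau3b g) (e (F d))) (ycoact P u)"
        by (simp add: tr_unit_coact[OF P] vmap_lin_pair vmap_snd_tens)
      also have "\<dots> = lin (\<lambda>(g, d). tens (tau3b g) (vsc (swc cc d) (e (swp s d)))) (ycoact V x)"
        by (simp add: Inl a V_def F_def ydsum_simps ydpow_simps vmap_vmap lin_vmap split_def)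
      finally show ?thesis using Inl by simp
    next
      case (Inr y)
      show ?thesis
      proof (cases y rule: sum.exhaust)
        case (Inl a)
        obtain j u where a: "a = (j, u)" by (cases a)
        define F where "F = (\<lambda>d. Inl (j, d) :: (nat \<times> unit) + ((nat \<times> unit) + bool))"
        have L: "ycoact W (swp s x) = vmap (\<lambda>(g, d). (g, F d)) (ycoact Q' u)"
          by (simp add: Inr Inl a W_def F_def ydsum_simps ydpow_simps vmap_vmap split_def)
        also have "\<dots> = lin (\<lambda>(g, d). tens (tau3b g) (e (F d))) (ycoact Q u)"
          by (simp add: tr_unit_coact[OF Q] vmap_lin_pair vmap_snd_tens)
        also have "\<dots> = lin (\<lambda>(g, d). tens (tau3b g) (vsc (swc cc d) (e (swp s d)))) (ycoact V x)"
          by (simp add: Inr Inl a V_def F_def ydsum_simps ydpow_simps vmap_vmap lin_vmap split_def)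
        finally show ?thesis using Inr Inl by simp
      next
        case (Inr p)
        define F where "F = (\<lambda>d. Inr (Inr d) :: (nat \<times> unit) + ((nat \<times> unit) + bool))"
        have "vsc (swc cc x) (ycoact W (swp s x)) = vmap (\<lambda>(g, d). (g, F d)) (vsc (cc p) (ycoact R' (s p)))"
          by (simp add: \<open>x = Inr y\<close> Inr W_def F_def ydsum_simps vmap_vmap vmap_vsc split_def)
        also have "\<dots> = vmap (\<lambda>(g, d). (g, F d)) (lin (\<lambda>(g, d). tens (tau3b g) (vsc (cc d) (e (s d)))) (ycoact R p))"
          by (simp add: RR.coact)
        also have "\<dots> = lin (\<lambda>(g, d). tens (tau3b g) (vsc (cc d) (e (F (s d))))) (ycoact R p)"
          by (simp add: vmap_lin_pair vmap_snd_tens vmap_vsc)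
        also have "\<dots> = lin (\<lambda>(g, d). tens (tau3b g) (vsc (swc cc d) (e (swp s d)))) (ycoact V x)"
          by (simp add: \<open>x = Inr y\<close> Inr V_def F_def ydsum_simps vmap_vmap lin_vmap split_def)
        finally show ?thesis .
      qed
    qed
  qed
  then show ?thesis by (simp add: V_def W_def)
qed


theorem corollary5p3:
  fixes i :: "'k::field_char_0"
  assumes alg_closed: "\<forall>p :: 'k poly. degree p > 0 \<longrightarrow> (\<exists>a. poly p a = 0)"
    and i_sq: "i * i = -1"
  shows "(\<forall>b \<in> {1, -1 :: 'k}. yd_iso (twist tau3 (Mbg (b * i) hx)) (Mbg (- b * i) hy))
       \<and> yd_iso (twist tau3 (Mpair hxy hx :: ('k, bool) ydm)) (Mpair hy hxy)
       \<and> (\<forall>b1 \<in> {1, -1 :: 'k}. yd_iso (twist tau3 (Wmod i b1)) (Wmod i (- b1)))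
       \<and> (\<forall>n1 n2. bos_iso (Omega2 i n1 n2) (Omega3 i n2 n1)
                 \<and> bos_iso (Omega4 i n1 n2) (Omega5 i n2 n1))"
proof (intro conjI ballI allI)
  have mi: "(- i) * (- i) = -1" using i_sq by simp
  have bMbg: "ybas (Mbg b0 g) = UNIV" for b0 :: 'k and g by (simp add: Mbg_def UNIV_unit)
  have bMpair: "ybas (Mpair g1 g2 :: ('k, bool) ydm) = UNIV" for g1 g2 by (simp add: Mpair_def)
  have bWmod: "ybas (Wmod i b1) = UNIV" for b1 :: 'k by (simp add: Wmod_def)
  have inz: "i \<noteq> 0" using i_sq by auto
  {
    fix b :: 'k assume b: "b \<in> {1, -1}"
    have "(b * i) * (b * i) = -1" using b i_sq by auto
    then have "tr (Mbg (b * i) hx) (Mbg (- (b * i)) hy) id (\<lambda>_. 1)" by (rule tr_Mbg) simp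
    then have "yd_iso (twist tau3 (Mbg (b * i) hx)) (Mbg (- (b * i)) hy)"
      by (rule yd_iso_tr) (simp_all add: bMbg)
    then show "yd_iso (twist tau3 (Mbg (b * i) hx)) (Mbg (- b * i) hy)" by simp
  }
  {
    have "tr (Mpair hxy hx :: ('k, bool) ydm) (Mpair hy hxy) Not (\<lambda>_. 1)" by (rule tr_Mpair) simp
    then show "yd_iso (twist tau3 (Mpair hxy hx :: ('k, bool) ydm)) (Mpair hy hxy)"
      by (rule yd_iso_tr) (simp_all add: bMpair)
  }
  {
    fix b1 :: 'k assume b1: "b1 \<in> {1, -1}"
    have "tr (Wmod i b1) (Wmod i (- b1)) id (\<lambda>v. if v then - i * b1 else 1)"
      by (rule tr_Wmod[OF i_sq]) (use b1 in auto)
    then show "yd_iso (twist tau3 (Wmod i b1)) (Wmod i (- b1))"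
      by (rule yd_iso_tr) (simp_all add: bWmod)
  }
  {
    fix n1 n2 :: nat
    have A: "tr (Omega2 i n1 n2) (Omega3 i n2 n1) (swp Not) (swc (\<lambda>_. 1))"
      unfolding Omega2_def Omega3_def
    proof (rule tr_omega)
      show "tr (Mbg i hx) (Mbg (- i) hy) id (\<lambda>_. 1)" by (rule tr_Mbg[OF i_sq]) simp
      show "tr (Mbg (- i) hx) (Mbg i hy) id (\<lambda>_. 1)" using tr_Mbg[OF mi, of hx hy] by simp
      show "tr (Mpair hxy hx) (Mpair hy hxy) Not (\<lambda>_. 1)" by (rule tr_Mpair) simp
    qed (simp_all add: bMbg bMpair)
    have B: "tr (Omega3 i n2 n1) (Omega2 i n1 n2) (swp Not) (swc (\<lambda>_. 1))"
      unfolding Omega2_def Omega3_def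
    proof (rule tr_omega)
      show "tr (Mbg i hy) (Mbg (- i) hx) id (\<lambda>_. 1)" by (rule tr_Mbg[OF i_sq]) simp
      show "tr (Mbg (- i) hy) (Mbg i hx) id (\<lambda>_. 1)" using tr_Mbg[OF mi, of hy hx] by simp
      show "tr (Mpair hy hxy) (Mpair hxy hx) Not (\<lambda>_. 1)" by (rule tr_Mpair) simp
    qed (simp_all add: bMbg bMpair)
    show "bos_iso (Omega2 i n1 n2) (Omega3 i n2 n1)"
      by (rule bos_iso_tr[OF A B]) (auto simp: swp_def swc_def split: sum.splits)
  }
  {
    fix n1 n2 :: nat
    have A: "tr (Omega4 i n1 n2) (Omega5 i n2 n1) (swp id) (swc (\<lambda>v. if v then - i * 1 else 1))"
      unfolding Omega4_def Omega5_def
    proof (rule tr_omega)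
      show "tr (Mbg i hx) (Mbg (- i) hy) id (\<lambda>_. 1)" by (rule tr_Mbg[OF i_sq]) simp
      show "tr (Mbg i hy) (Mbg (- i) hx) id (\<lambda>_. 1)" by (rule tr_Mbg[OF i_sq]) simp
      show "tr (Wmod i 1) (Wmod i (- 1)) id (\<lambda>v. if v then - i * 1 else 1)" by (rule tr_Wmod[OF i_sq]) simp
    qed (simp_all add: bMbg bWmod)
    have B: "tr (Omega5 i n2 n1) (Omega4 i n1 n2) (swp id) (swc (\<lambda>v. if v then - i * (- 1) else 1))"
      unfolding Omega4_def Omega5_def
    proof (rule tr_omega)
      show "tr (Mbg (- i) hx) (Mbg i hy) id (\<lambda>_. 1)" using tr_Mbg[OF mi, of hx hy] by simp
      show "tr (Mbg (- i) hy) (Mbg i hx) id (\<lambda>_. 1)" using tr_Mbg[OF mi, of hy hx] by simp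
      show "tr (Wmod i (- 1)) (Wmod i 1) id (\<lambda>v. if v then - i * (- 1) else 1)"
        using tr_Wmod[OF i_sq, of "- 1"] by simp
    qed (simp_all add: bMbg bWmod)
    have ii: "i = 1 / (- i)" using i_sq inz by (simp add: field_simps)
    show "bos_iso (Omega4 i n1 n2) (Omega5 i n2 n1)"
      by (rule bos_iso_tr[OF A B]) (use ii in \<open>auto simp: swp_def swc_def split: sum.splits\<close>)
  }
qed


end
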